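(* Suppose the joint distribution of $(Y,X,W_1)$ is known, $\operatorname{cov}(W_1,X)\ne0$, and $\beta_{\text{med}}\ge 0$. Let $\mathcal B_I(\bar r_X)=\mathcal B_I(\bar r_X,0,1)$ and $\bar r_X^{\text{bp}}=\inf\{\bar r_X\ge0: b\in\mathcal B_I(\bar r_X)\text{ for some } b\le 0\}$. Then $$\bar r_X^{\text{bp}}=\left(\frac{R^2_{Y\sim X\bullet W_1}}{\frac{R^2_{X\sim W_1}}{1-R^2_{X\sim W_1}}+R^2_{Y\sim X\bullet W_1}}\right)^{1/2},$$ where $R^2_{Y\sim X\bullet W_1}=\beta_{\text{med}}^2\operatorname{var}(X^{\perp W_1})/\operatorname{var}(Y^{\perp W_1})$.
   Context: Let $(Y,X,W_1,W_2)$ be a random vector with finite second moments, $Y,X\in\mathbb R$, $W_1\in\mathbb R^{d_1}$, $W_2\in\mathbb R$. For random vectors $A,B$ with $\operatorname{var}(B)$ invertible, $A^{\perp B}=A-\operatorname{cov}(A,B)\operatorname{var}(B)^{-1}B$. $\beta_{\text{long}},\gamma_1,\gamma_2$ are the coefficients on $X,W_1,W_2$ in the linear projection of $Y$ on $(1,X,W_1,W_2)$; $\pi_1,\pi_2$ the coefficients on $W_1,W_2$ in the linear projection of $X$ on $(1,W_1,W_2)$; $\beta_{\text{med}}$ the coefficient on $X$ in the linear projection of $Y$ on $(1,X,W_1)$. $\Sigma_{\text{obs}}=\operatorname{var}(W_1)$, $c=\operatorname{cov}(W_1,W_2)$, $R_{W_2\sim W_1}=\sqrt{c'\Sigma_{\text{obs}}^{-1}c/\operatorname{var}(W_2)}$.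 $R^2_{X\sim W_1}$ is the population $R^2$ of the projection of $X$ on $(1,W_1)$. Assumptions: (A1) $\operatorname{var}(Y,X,W_1,W_2)$ positive definite; (A-rx) $\sqrt{\operatorname{var}(\pi_2W_2)}\le\bar r_X\sqrt{\operatorname{var}(\pi_1'W_1)}$; (A-c) $R_{W_2\sim W_1}\in[\underline c,\bar c]$. $\mathcal B_I(\bar r_X,\underline c,\bar c)$ is the set of $b\in\mathbb R$ for which there exists a random vector $(\tilde Y,\tilde X,\tilde W_1,\tilde W_2)$ with $(\tilde Y,\tilde X,\tilde W_1)$ equal in distribution to $(Y,X,W_1)$, $\tilde W_2$ scalar with $\operatorname{var}(\tilde W_2)=1$, satisfying (A1), (A-rx), (A-c), and whose $\beta_{\text{long}}$ equals $b$. *)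

theory Defs
  imports "HOL-Probability.Probability"
begin

definition mean :: "'a measure \<Rightarrow> ('a \<Rightarrow> real) \<Rightarrow> real" where
  "mean M f = integral\<^sup>L M f"

definition cov :: "'a measure \<Rightarrow> ('a \<Rightarrow> real) \<Rightarrow> ('a \<Rightarrow> real) \<Rightarrow> real" where
  "cov M f g = mean M (\<lambda>\<omega>. (f \<omega> - mean M f) * (g \<omega> - mean M g))"

definition varm :: "'a measure \<Rightarrow> ('a \<Rightarrow> real) \<Rightarrow> real" where
  "varm M f = cov M f f"

definition second_moment :: "'a measure \<Rightarrow> ('a \<Rightarrow> real) \<Rightarrow> bool" where
  "second_moment M f \<longleftrightarrow> f \<in> borel_measurable M \<and> integrable M (\<lambda>\<omega>. (f \<omega>)\<^sup>2)"

text \<open>A random vector is represented as a finite family of real random variables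
  indexed by a finite type 'i.  var(B) and cov(B,A):\<close>
definition covmat :: "'a measure \<Rightarrow> ('i::finite \<Rightarrow> 'a \<Rightarrow> real) \<Rightarrow> real^'i^'i" where
  "covmat M Z = (\<chi> i j. cov M (Z i) (Z j))"

definition covvec :: "'a measure \<Rightarrow> ('i::finite \<Rightarrow> 'a \<Rightarrow> real) \<Rightarrow> ('a \<Rightarrow> real) \<Rightarrow> real^'i" where
  "covvec M Z f = (\<chi> i. cov M (Z i) f)"

definition posdef :: "real^'i^'i \<Rightarrow> bool" where
  "posdef A \<longleftrightarrow> (\<forall>v. v \<noteq> 0 \<longrightarrow> v \<bullet> (A *v v) > 0)"

text \<open>Slope coefficients of the linear projection of f on (1, Z):
  var(Z)^{-1} cov(Z, f).\<close>
definition proj_coef :: "'a measure \<Rightarrow> ('i::finite \<Rightarrow> 'a \<Rightarrow> real) \<Rightarrow> ('a \<Rightarrow> real) \<Rightarrow> real^'i" where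
  "proj_coef M Z f = matrix_inv (covmat M Z) *v covvec M Z f"

definition perp :: "'a measure \<Rightarrow> ('a \<Rightarrow> real) \<Rightarrow> ('i::finite \<Rightarrow> 'a \<Rightarrow> real) \<Rightarrow> 'a \<Rightarrow> real" where
  "perp M f Z = (\<lambda>\<omega>. f \<omega> - covvec M Z f \<bullet> (matrix_inv (covmat M Z) *v (\<chi> i. Z i \<omega>)))"

definition rsq :: "'a measure \<Rightarrow> ('a \<Rightarrow> real) \<Rightarrow> ('i::finite \<Rightarrow> 'a \<Rightarrow> real) \<Rightarrow> real" where
  "rsq M f Z = varm M (\<lambda>\<omega>. proj_coef M Z f \<bullet> (\<chi> i. Z i \<omega>)) / varm M f"

datatype 'd idx_XW = iX | iW 'd
datatype 'd idx_WW = jW1 'd | jW2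
datatype 'd idx_XWW = kX | kW1 'd | kW2
datatype 'd idx_YXW = lY | lX | lW 'd
datatype 'd idx_YXWW = mY | mX | mW1 'd | mW2

instance idx_XW :: (finite) finite
proof
  have "(UNIV :: 'a idx_XW set) = insert iX (range iW)"
    by (auto, case_tac x, auto)
  then show "finite (UNIV :: 'a idx_XW set)" by (metis finite_imageI finite_insert finite_class.finite_UNIV)
qed

instance idx_WW :: (finite) finite
proof
  have "(UNIV :: 'a idx_WW set) = insert jW2 (range jW1)"
    by (auto, case_tac x, auto)
  then show "finite (UNIV :: 'a idx_WW set)" by (metis finite_imageI finite_insert finite_class.finite_UNIV)
qed

instance idx_XWW :: (finite) finite
proof
  have "(UNIV :: 'a idx_XWW set) = insert kX (insert kW2 (range kW1))"
    by (auto, case_tac x, auto)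
  then show "finite (UNIV :: 'a idx_XWW set)" by (metis finite_imageI finite_insert finite_class.finite_UNIV)
qed

instance idx_YXW :: (finite) finite
proof
  have "(UNIV :: 'a idx_YXW set) = insert lY (insert lX (range lW))"
    by (auto, case_tac x, auto)
  then show "finite (UNIV :: 'a idx_YXW set)" by (metis finite_imageI finite_insert finite_class.finite_UNIV)
qed

instance idx_YXWW :: (finite) finite
proof
  have "(UNIV :: 'a idx_YXWW set) = insert mY (insert mX (insert mW2 (range mW1)))"
    by (auto, case_tac x, auto)
  then show "finite (UNIV :: 'a idx_YXWW set)" by (metis finite_imageI finite_insert finite_class.finite_UNIV)
qed

text \<open>Components of W1 (a random vector in R^d1, d1 = CARD('d)).\<close>
definition wfam :: "('a \<Rightarrow> real^'d) \<Rightarrow> 'd \<Rightarrow> 'a \<Rightarrow> real" where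
  "wfam W = (\<lambda>i \<omega>. W \<omega> $ i)"

definition fam_XW :: "('a \<Rightarrow> real) \<Rightarrow> ('a \<Rightarrow> real^'d) \<Rightarrow> 'd idx_XW \<Rightarrow> 'a \<Rightarrow> real" where
  "fam_XW X W = (\<lambda>k. case k of iX \<Rightarrow> X | iW i \<Rightarrow> (\<lambda>\<omega>. W \<omega> $ i))"

definition fam_WW :: "('a \<Rightarrow> real^'d) \<Rightarrow> ('a \<Rightarrow> real) \<Rightarrow> 'd idx_WW \<Rightarrow> 'a \<Rightarrow> real" where
  "fam_WW W W2 = (\<lambda>k. case k of jW1 i \<Rightarrow> (\<lambda>\<omega>. W \<omega> $ i) | jW2 \<Rightarrow> W2)"

definition fam_XWW :: "('a \<Rightarrow> real) \<Rightarrow> ('a \<Rightarrow> real^'d) \<Rightarrow> ('a \<Rightarrow> real) \<Rightarrow> 'd idx_XWW \<Rightarrow> 'a \<Rightarrow> real" where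
  "fam_XWW X W W2 = (\<lambda>k. case k of kX \<Rightarrow> X | kW1 i \<Rightarrow> (\<lambda>\<omega>. W \<omega> $ i) | kW2 \<Rightarrow> W2)"

definition fam_YXW :: "('a \<Rightarrow> real) \<Rightarrow> ('a \<Rightarrow> real) \<Rightarrow> ('a \<Rightarrow> real^'d) \<Rightarrow> 'd idx_YXW \<Rightarrow> 'a \<Rightarrow> real" where
  "fam_YXW Y X W = (\<lambda>k. case k of lY \<Rightarrow> Y | lX \<Rightarrow> X | lW i \<Rightarrow> (\<lambda>\<omega>. W \<omega> $ i))"

definition fam_YXWW :: "('a \<Rightarrow> real) \<Rightarrow> ('a \<Rightarrow> real) \<Rightarrow> ('a \<Rightarrow> real^'d) \<Rightarrow> ('a \<Rightarrow> real) \<Rightarrow> 'd idx_YXWW \<Rightarrow> 'a \<Rightarrow> real" where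
  "fam_YXWW Y X W W2 = (\<lambda>k. case k of mY \<Rightarrow> Y | mX \<Rightarrow> X | mW1 i \<Rightarrow> (\<lambda>\<omega>. W \<omega> $ i) | mW2 \<Rightarrow> W2)"

definition beta_long :: "'a measure \<Rightarrow> ('a \<Rightarrow> real) \<Rightarrow> ('a \<Rightarrow> real) \<Rightarrow> ('a \<Rightarrow> real^'d) \<Rightarrow> ('a \<Rightarrow> real) \<Rightarrow> real" where
  "beta_long M Y X W W2 = proj_coef M (fam_XWW X W W2) Y $ kX"

definition beta_med :: "'a measure \<Rightarrow> ('a \<Rightarrow> real) \<Rightarrow> ('a \<Rightarrow> real) \<Rightarrow> ('a \<Rightarrow> real^'d) \<Rightarrow> real" where
  "beta_med M Y X W = proj_coef M (fam_XW X W) Y $ iX"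

definition pi1 :: "'a measure \<Rightarrow> ('a \<Rightarrow> real) \<Rightarrow> ('a \<Rightarrow> real^'d) \<Rightarrow> ('a \<Rightarrow> real) \<Rightarrow> real^'d" where
  "pi1 M X W W2 = (\<chi> i. proj_coef M (fam_WW W W2) X $ jW1 i)"

definition pi2 :: "'a measure \<Rightarrow> ('a \<Rightarrow> real) \<Rightarrow> ('a \<Rightarrow> real^'d) \<Rightarrow> ('a \<Rightarrow> real) \<Rightarrow> real" where
  "pi2 M X W W2 = proj_coef M (fam_WW W W2) X $ jW2"

definition R_W2_W1 :: "'a measure \<Rightarrow> ('a \<Rightarrow> real^'d) \<Rightarrow> ('a \<Rightarrow> real) \<Rightarrow> real" where
  "R_W2_W1 M W W2 = sqrt ((covvec M (wfam W) W2 \<bullet> (matrix_inv (covmat M (wfam W)) *v covvec M (wfam W) W2))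
                          / varm M W2)"

definition A1 :: "'a measure \<Rightarrow> ('a \<Rightarrow> real) \<Rightarrow> ('a \<Rightarrow> real) \<Rightarrow> ('a \<Rightarrow> real^'d) \<Rightarrow> ('a \<Rightarrow> real) \<Rightarrow> bool" where
  "A1 M Y X W W2 \<longleftrightarrow> posdef (covmat M (fam_YXWW Y X W W2))"

definition A_rx :: "real \<Rightarrow> 'a measure \<Rightarrow> ('a \<Rightarrow> real) \<Rightarrow> ('a \<Rightarrow> real^'d) \<Rightarrow> ('a \<Rightarrow> real) \<Rightarrow> bool" where
  "A_rx r M X W W2 \<longleftrightarrow>
     sqrt (varm M (\<lambda>\<omega>. pi2 M X W W2 * W2 \<omega>)) \<le> r * sqrt (varm M (\<lambda>\<omega>. pi1 M X W W2 \<bullet> W \<omega>))"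

definition A_c :: "real \<Rightarrow> real \<Rightarrow> 'a measure \<Rightarrow> ('a \<Rightarrow> real^'d) \<Rightarrow> ('a \<Rightarrow> real) \<Rightarrow> bool" where
  "A_c cl ch M W W2 \<longleftrightarrow> cl \<le> R_W2_W1 M W W2 \<and> R_W2_W1 M W W2 \<le> ch"

text \<open>A candidate random vector (Y~, X~, W1~, W2~) is represented by its law N, a
  Borel probability measure on R x R x R^d1 x R, with the coordinate projections
  as the random variables.\<close>
definition cY :: "real \<times> real \<times> (real^'d) \<times> real \<Rightarrow> real" where "cY = (\<lambda>(y,x,w,v). y)"
definition cX :: "real \<times> real \<times> (real^'d) \<times> real \<Rightarrow> real" where "cX = (\<lambda>(y,x,w,v). x)"
definition cW1 :: "real \<times> real \<times> (real^'d) \<times> real \<Rightarrow> real^'d" where "cW1 = (\<lambda>(y,x,w,v). w)"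
definition cW2 :: "real \<times> real \<times> (real^'d) \<times> real \<Rightarrow> real" where "cW2 = (\<lambda>(y,x,w,v). v)"

definition B_I :: "'a measure \<Rightarrow> ('a \<Rightarrow> real) \<Rightarrow> ('a \<Rightarrow> real) \<Rightarrow> ('a \<Rightarrow> real^'d)
                    \<Rightarrow> real \<Rightarrow> real \<Rightarrow> real \<Rightarrow> real set" where
  "B_I M Y X W r cl ch = {b. \<exists>N :: (real \<times> real \<times> (real^'d) \<times> real) measure.
      prob_space N \<and> sets N = sets borel \<and>
      second_moment N cY \<and> second_moment N cX \<and> (\<forall>i. second_moment N (\<lambda>\<omega>. cW1 \<omega> $ i)) \<and>
      second_moment N cW2 \<and>
      distr N borel (\<lambda>\<omega>. (cY \<omega>, cX \<omega>, cW1 \<omega>)) = distr M borel (\<lambda>\<omega>. (Y \<omega>, X \<omega>, W \<omega>)) \<and>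
      varm N cW2 = 1 \<and>
      A1 N cY cX cW1 cW2 \<and> A_rx r N cX cW1 cW2 \<and> A_c cl ch N cW1 cW2 \<and>
      beta_long N cY cX cW1 cW2 = b}"

end

theory Submission
  imports Defs
begin

lemma abs_le_1_sq: "\<bar>x::real\<bar> \<le> 1 + x\<^sup>2"
proof -
  have "0 \<le> (\<bar>x\<bar> - 1)\<^sup>2" by simp
  then have "2 * \<bar>x\<bar> \<le> 1 + x\<^sup>2" by (simp add: power2_diff power2_abs algebra_simps)
  then show ?thesis by (smt (verit) zero_le_power2)
qed

lemma abs_mult_le_sq: "\<bar>(x::real) * y\<bar> \<le> x\<^sup>2 + y\<^sup>2"
proof -
  have "0 \<le> (\<bar>x\<bar> - \<bar>y\<bar>)\<^sup>2" by simp
  then have "2 * \<bar>x * y\<bar> \<le> x\<^sup>2 + y\<^sup>2" by (simp add: power2_diff power2_abs abs_mult algebra_simps)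
  then show ?thesis by (smt (verit) zero_le_power2)
qed

lemma sq_add_le: "((x::real) + y)\<^sup>2 \<le> 2 * x\<^sup>2 + 2 * y\<^sup>2"
proof -
  have "0 \<le> (x - y)\<^sup>2" by simp
  then show ?thesis by (simp add: power2_diff power2_sum algebra_simps)
qed

context prob_space
begin

lemma sm_meas[measurable_dest]: "second_moment M f \<Longrightarrow> f \<in> borel_measurable M"
  by (simp add: second_moment_def)

lemma sm_int: assumes "second_moment M f" shows "integrable M f"
proof -
  have i: "integrable M (\<lambda>x. 1 + (f x)\<^sup>2)" using assms by (auto simp: second_moment_def)
  show ?thesis
    by (rule Bochner_Integration.integrable_bound[OF i]) (use assms abs_le_1_sq in \<open>auto simp: second_moment_def\<close>)
qed

lemma sm_mult_int: assumes "second_moment M f" "second_moment M g" shows "integrable M (\<lambda>x. f x * g x)"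
proof -
  have i: "integrable M (\<lambda>x. (f x)\<^sup>2 + (g x)\<^sup>2)" using assms by (auto simp: second_moment_def)
  show ?thesis
    by (rule Bochner_Integration.integrable_bound[OF i]) (use assms abs_mult_le_sq in \<open>auto simp: second_moment_def\<close>)
qed

lemma sm_add[simp]: assumes "second_moment M f" "second_moment M g" shows "second_moment M (\<lambda>x. f x + g x)"
proof -
  have i: "integrable M (\<lambda>x. 2 * (f x)\<^sup>2 + 2 * (g x)\<^sup>2)" using assms by (auto simp: second_moment_def)
  have "integrable M (\<lambda>x. (f x + g x)\<^sup>2)"
    by (rule Bochner_Integration.integrable_bound[OF i]) (use assms sq_add_le in \<open>auto simp: second_moment_def\<close>)
  then show ?thesis using assms by (auto simp: second_moment_def)
qed

lemma sm_scale[simp]: assumes "second_moment M f" shows "second_moment M (\<lambda>x. c * f x)"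
  using assms by (auto simp: second_moment_def power_mult_distrib)

lemma sm_const[simp]: "second_moment M (\<lambda>x. c)"
  by (auto simp: second_moment_def)

lemma sm_uminus[simp]: assumes "second_moment M f" shows "second_moment M (\<lambda>x. - f x)"
  using sm_scale[OF assms, of "-1"] by simp

lemma sm_diff[simp]: assumes "second_moment M f" "second_moment M g" shows "second_moment M (\<lambda>x. f x - g x)"
  using sm_add[OF assms(1) sm_uminus[OF assms(2)]] by simp

lemma sm_sum[simp]: assumes "\<And>i. i \<in> S \<Longrightarrow> second_moment M (f i)" shows "second_moment M (\<lambda>x. \<Sum>i\<in>S. f i x)"
  using assms
proof (induction S rule: infinite_finite_induct)
  case (insert i S) then show ?case by simp
qed simp_all

lemma cov_alt: assumes "second_moment M f" "second_moment M g"
  shows "cov M f g = expectation (\<lambda>x. f x * g x) - expectation f * expectation g"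
proof -
  have if_: "integrable M f" "integrable M g" using assms sm_int by auto
  have ifg: "integrable M (\<lambda>x. f x * g x)" using assms sm_mult_int by auto
  have "cov M f g = expectation (\<lambda>x. f x * g x - expectation f * g x - expectation g * f x + expectation f * expectation g)"
    unfolding cov_def mean_def by (rule arg_cong[where f=expectation]) (auto simp: algebra_simps)
  also have "\<dots> = expectation (\<lambda>x. f x * g x) - expectation f * expectation g - expectation g * expectation f + expectation f * expectation g"
    using if_ ifg by (simp add: prob_space)
  finally show ?thesis by simp
qed

lemma cov_sym: "cov M f g = cov M g f"
  unfolding cov_def by (simp add: mult.commute)

lemma cov_add_left: assumes "second_moment M f" "second_moment M g" "second_moment M h"
  shows "cov M (\<lambda>x. f x + g x) h = cov M f h + cov M g h"
  using assms by (simp add: cov_alt sm_int sm_mult_int distrib_right algebra_simps)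

lemma cov_scale_left: assumes "second_moment M f" "second_moment M h"
  shows "cov M (\<lambda>x. c * f x) h = c * cov M f h"
  using assms by (simp add: cov_alt sm_int sm_mult_int algebra_simps)

lemma cov_const_left: assumes "second_moment M h" shows "cov M (\<lambda>x. c) h = 0"
  using assms by (simp add: cov_alt sm_int prob_space)


lemma cov_add_right: assumes "second_moment M f" "second_moment M g" "second_moment M h"
  shows "cov M h (\<lambda>x. f x + g x) = cov M h f + cov M h g"
  using cov_add_left[OF assms] by (simp add: cov_sym)

lemma cov_scale_right: assumes "second_moment M f" "second_moment M h"
  shows "cov M h (\<lambda>x. c * f x) = c * cov M h f"
  using cov_scale_left[OF assms] by (simp add: cov_sym)

lemma cov_const_right: assumes "second_moment M h" shows "cov M h (\<lambda>x. c) = 0"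
  using cov_const_left[OF assms] by (simp add: cov_sym)

lemma cov_uminus_left: assumes "second_moment M f" "second_moment M h"
  shows "cov M (\<lambda>x. - f x) h = - cov M f h"
  using cov_scale_left[OF assms, of "-1"] by simp

lemma cov_diff_left: assumes "second_moment M f" "second_moment M g" "second_moment M h"
  shows "cov M (\<lambda>x. f x - g x) h = cov M f h - cov M g h"
  using cov_add_left[OF assms(1) sm_uminus[OF assms(2)] assms(3)] cov_uminus_left[OF assms(2,3)] by simp

lemma cov_diff_right: assumes "second_moment M f" "second_moment M g" "second_moment M h"
  shows "cov M h (\<lambda>x. f x - g x) = cov M h f - cov M h g"
  using cov_diff_left[OF assms] by (simp add: cov_sym)

lemma cov_sum_left: assumes "\<And>i. i \<in> S \<Longrightarrow> second_moment M (f i)" "second_moment M h"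
  shows "cov M (\<lambda>x. \<Sum>i\<in>S. f i x) h = (\<Sum>i\<in>S. cov M (f i) h)"
  using assms(1)
proof (induction S rule: infinite_finite_induct)
  case (infinite A) then show ?case using assms(2) by (simp add: cov_const_left)
next
  case empty then show ?case using assms(2) by (simp add: cov_const_left)
next
  case (insert i S)
  have "cov M (\<lambda>x. \<Sum>i\<in>insert i S. f i x) h = cov M (\<lambda>x. f i x + (\<Sum>i\<in>S. f i x)) h"
    using insert by simp
  also have "\<dots> = cov M (f i) h + cov M (\<lambda>x. \<Sum>i\<in>S. f i x) h"
    using insert assms(2) by (intro cov_add_left) auto
  finally show ?case using insert by simp
qed

lemma varm_nonneg: "0 \<le> varm M f"
  unfolding varm_def cov_def mean_def by (rule integral_nonneg_AE) simp

lemma varm_lin: assumes "second_moment M f" "second_moment M g"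
  shows "varm M (\<lambda>x. f x - t * g x) = varm M f - 2 * t * cov M f g + t\<^sup>2 * varm M g"
  using assms unfolding varm_def
  by (simp add: cov_diff_left cov_diff_right cov_scale_left cov_scale_right cov_sym[of g f] power2_eq_square algebra_simps)

lemma cov_CS: assumes "second_moment M f" "second_moment M g"
  shows "(cov M f g)\<^sup>2 \<le> varm M f * varm M g"
proof (cases "varm M g = 0")
  case True
  show ?thesis
  proof (rule ccontr)
    assume "\<not> ?thesis"
    then have c: "cov M f g \<noteq> 0" using True by simp
    define t where "t = (varm M f + 1) / (2 * cov M f g)"
    have "0 \<le> varm M (\<lambda>x. f x - t * g x)" by (rule varm_nonneg)
    also have "\<dots> = varm M f - 2 * t * cov M f g" using varm_lin[OF assms, of t] True by simp
    also have "\<dots> = -1" using c by (simp add: t_def field_simps)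
    finally show False by simp
  qed
next
  case False
  then have pos: "0 < varm M g" using varm_nonneg[of g] by simp
  define t where "t = cov M f g / varm M g"
  have "0 \<le> varm M (\<lambda>x. f x - t * g x)" by (rule varm_nonneg)
  also have "\<dots> = varm M f - (cov M f g)\<^sup>2 / varm M g"
    using varm_lin[OF assms, of t] pos by (simp add: t_def power2_eq_square field_simps)
  finally show ?thesis using pos by (simp add: field_simps)
qed

lemma cov_inner_left: assumes "\<And>k. second_moment M (Z k)" "second_moment M h"
  shows "cov M (\<lambda>x. a \<bullet> (\<chi> k. Z k x)) h = a \<bullet> covvec M Z h"
proof -
  have "cov M (\<lambda>x. a \<bullet> (\<chi> k. Z k x)) h = cov M (\<lambda>x. \<Sum>k\<in>UNIV. a $ k * Z k x) h"
    by (simp add: inner_vec_def)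
  also have "\<dots> = (\<Sum>k\<in>UNIV. cov M (\<lambda>x. a $ k * Z k x) h)"
    using assms by (intro cov_sum_left) auto
  also have "\<dots> = (\<Sum>k\<in>UNIV. a $ k * cov M (Z k) h)"
    using assms by (simp add: cov_scale_left)
  finally show ?thesis by (simp add: inner_vec_def covvec_def)
qed

lemma sm_inner[simp]: assumes "\<And>k. second_moment M (Z k)"
  shows "second_moment M (\<lambda>x. a \<bullet> (\<chi> k. Z k x))"
  using assms by (simp add: inner_vec_def)

lemma cov_inner_right: assumes "\<And>k. second_moment M (Z k)" "second_moment M h"
  shows "cov M h (\<lambda>x. a \<bullet> (\<chi> k. Z k x)) = a \<bullet> covvec M Z h"
  using cov_inner_left[OF assms] by (simp add: cov_sym)

lemma covmat_sym: "Finite_Cartesian_Product.transpose (covmat M Z) = covmat M Z"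
  by (simp add: covmat_def transpose_def cov_sym vec_eq_iff)

lemma covvec_inner: assumes "\<And>k. second_moment M (Z k)"
  shows "covvec M Z (\<lambda>x. a \<bullet> (\<chi> k. Z k x)) = covmat M Z *v a"
proof -
  have e: "\<And>i. cov M (Z i) (\<lambda>x. a \<bullet> (\<chi> k. Z k x)) = (\<Sum>j\<in>UNIV. a$j * cov M (Z j) (Z i))"
    using cov_inner_right[OF assms assms] by (simp add: inner_vec_def covvec_def)
  show ?thesis by (simp add: e vec_eq_iff covvec_def matrix_vector_mult_def covmat_def cov_sym mult.commute)
qed

lemma var_inner: assumes "\<And>k. second_moment M (Z k)"
  shows "varm M (\<lambda>x. a \<bullet> (\<chi> k. Z k x)) = a \<bullet> (covmat M Z *v a)"
  unfolding varm_def using assms by (simp add: cov_inner_left covvec_inner)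

end

lemma inv_props: assumes "invertible A"
  shows "A ** matrix_inv A = mat 1" "matrix_inv A ** A = mat 1"
proof -
  have "A ** matrix_inv A = mat 1 \<and> matrix_inv A ** A = mat 1"
    using assms unfolding matrix_inv_def invertible_def by (rule someI_ex)
  then show "A ** matrix_inv A = mat 1" "matrix_inv A ** A = mat 1" by auto
qed

lemma posdef_invertible: assumes "posdef A" shows "invertible A"
proof -
  have "\<forall>x. A *v x = 0 \<longrightarrow> x = 0"
  proof (intro allI impI)
    fix x assume "A *v x = 0"
    then show "x = 0" using assms unfolding posdef_def by (metis inner_zero_right less_irrefl)
  qed
  then obtain B where "B ** A = mat 1" using matrix_left_invertible_ker by blast
  then have "A ** B = mat 1" using matrix_left_right_inverse by blast
  then show ?thesis unfolding invertible_def using \<open>B ** A = mat 1\<close> by blast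
qed

lemma vm_transpose: fixes A :: "real^'n^'m" shows "x v* A = Finite_Cartesian_Product.transpose A *v x"
  by (simp add: vec_eq_iff vector_matrix_mult_def matrix_vector_mult_def transpose_def) (auto intro!: sum.cong simp: mult.commute)

context prob_space
begin

lemma proj_normal: assumes "invertible (covmat M Z)"
  shows "covmat M Z *v proj_coef M Z f = covvec M Z f"
  using assms by (simp add: proj_coef_def matrix_vector_mul_assoc inv_props)

lemma proj_orth: assumes "invertible (covmat M Z)" "\<And>k. second_moment M (Z k)" "second_moment M f"
  shows "cov M (Z i) (\<lambda>x. f x - proj_coef M Z f \<bullet> (\<chi> k. Z k x)) = 0"
proof -
  have "cov M (Z i) (\<lambda>x. f x - proj_coef M Z f \<bullet> (\<chi> k. Z k x))
      = cov M (Z i) f - cov M (Z i) (\<lambda>x. proj_coef M Z f \<bullet> (\<chi> k. Z k x))"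
    using assms by (intro cov_diff_right) auto
  also have "cov M (Z i) (\<lambda>x. proj_coef M Z f \<bullet> (\<chi> k. Z k x)) = covvec M Z (\<lambda>x. proj_coef M Z f \<bullet> (\<chi> k. Z k x)) $ i"
    by (simp add: covvec_def)
  also have "\<dots> = covvec M Z f $ i" using assms by (simp add: covvec_inner proj_normal)
  finally show ?thesis by (simp add: covvec_def)
qed

lemma proj_unique: assumes "invertible (covmat M Z)" "\<And>k. second_moment M (Z k)" "second_moment M f"
  and "\<And>i. cov M (Z i) (\<lambda>x. f x - q \<bullet> (\<chi> k. Z k x)) = 0"
  shows "proj_coef M Z f = q"
proof -
  have "\<And>i. cov M (Z i) f = cov M (Z i) (\<lambda>x. q \<bullet> (\<chi> k. Z k x))"
  proof -
    fix i
    have "0 = cov M (Z i) f - cov M (Z i) (\<lambda>x. q \<bullet> (\<chi> k. Z k x))"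
      using assms(4)[of i] assms(2,3) cov_diff_right[of f "\<lambda>x. q \<bullet> (\<chi> k. Z k x)" "Z i"] by simp
    then show "cov M (Z i) f = cov M (Z i) (\<lambda>x. q \<bullet> (\<chi> k. Z k x))" by simp
  qed
  then have "covvec M Z f = covvec M Z (\<lambda>x. q \<bullet> (\<chi> k. Z k x))" by (simp add: covvec_def)
  also have "\<dots> = covmat M Z *v q" using assms by (simp add: covvec_inner)
  finally show ?thesis using assms(1)
    by (simp add: proj_coef_def matrix_vector_mul_assoc inv_props)
qed

lemma perp_eq: assumes "invertible (covmat M Z)"
  shows "perp M f Z = (\<lambda>x. f x - proj_coef M Z f \<bullet> (\<chi> k. Z k x))"
proof -
  have "\<And>z. covvec M Z f \<bullet> (matrix_inv (covmat M Z) *v z) = proj_coef M Z f \<bullet> z"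
  proof -
    fix z
    have "covvec M Z f \<bullet> (matrix_inv (covmat M Z) *v z) = (proj_coef M Z f v* covmat M Z) \<bullet> (matrix_inv (covmat M Z) *v z)"
      using assms by (simp add: vm_transpose covmat_sym proj_normal)
    also have "\<dots> = proj_coef M Z f \<bullet> z"
      using assms by (simp add: dot_lmul_matrix matrix_vector_mul_assoc inv_props)
    finally show "covvec M Z f \<bullet> (matrix_inv (covmat M Z) *v z) = proj_coef M Z f \<bullet> z" .
  qed
  then show ?thesis by (simp add: perp_def)
qed

lemma posdef_var: assumes "posdef (covmat M Z)" "\<And>k. second_moment M (Z k)" "v \<noteq> 0"
  shows "0 < varm M (\<lambda>x. v \<bullet> (\<chi> k. Z k x))"
  using assms by (simp add: var_inner posdef_def)

lemma posdef_sub: fixes g :: "'j::finite \<Rightarrow> 'i::finite" and Z :: "'i \<Rightarrow> 'a \<Rightarrow> real"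
  assumes "posdef (covmat M Z)" "\<And>k. second_moment M (Z k)" "inj g"
  shows "posdef (covmat M (\<lambda>j. Z (g j)))"
  unfolding posdef_def
proof (intro allI impI)
  fix v :: "real^'j" assume v: "v \<noteq> 0"
  define u where "u = (\<chi> i. if i \<in> range g then v $ (inv g i) else 0)"
  have ug: "\<And>j. u $ g j = v $ j" using assms(3) by (simp add: u_def)
  have "u \<noteq> 0" using v ug by (metis vec_eq_iff zero_index)
  have eq: "\<And>x. v \<bullet> (\<chi> j. Z (g j) x) = u \<bullet> (\<chi> i. Z i x)"
  proof -
    fix x
    have "u \<bullet> (\<chi> i. Z i x) = (\<Sum>i\<in>UNIV. u $ i * Z i x)" by (simp add: inner_vec_def)
    also have "\<dots> = (\<Sum>i\<in>range g. u $ i * Z i x)"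
      by (rule sum.mono_neutral_right) (auto simp: u_def)
    also have "\<dots> = (\<Sum>j\<in>UNIV. u $ g j * Z (g j) x)"
      using assms(3) by (simp add: sum.reindex)
    finally show "v \<bullet> (\<chi> j. Z (g j) x) = u \<bullet> (\<chi> i. Z i x)" by (simp add: ug inner_vec_def)
  qed
  have "v \<bullet> (covmat M (\<lambda>j. Z (g j)) *v v) = varm M (\<lambda>x. v \<bullet> (\<chi> j. Z (g j) x))"
    using assms by (simp add: var_inner)
  also have "\<dots> = varm M (\<lambda>x. u \<bullet> (\<chi> i. Z i x))" by (simp add: eq)
  also have "\<dots> > 0" using posdef_var[OF assms(1,2) \<open>u \<noteq> 0\<close>] .
  finally show "0 < v \<bullet> (covmat M (\<lambda>j. Z (g j)) *v v)" .
qed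

end

lemma UNIV_XW: "(UNIV :: 'd idx_XW set) = insert iX (range iW)"
proof (rule set_eqI) fix x show "x \<in> UNIV \<longleftrightarrow> x \<in> insert iX (range iW)" by (cases x) auto qed
lemma UNIV_WW: "(UNIV :: 'd idx_WW set) = insert jW2 (range jW1)"
proof (rule set_eqI) fix x show "x \<in> UNIV \<longleftrightarrow> x \<in> insert jW2 (range jW1)" by (cases x) auto qed
lemma UNIV_XWW: "(UNIV :: 'd idx_XWW set) = insert kX (insert kW2 (range kW1))"
proof (rule set_eqI) fix x show "x \<in> UNIV \<longleftrightarrow> x \<in> insert kX (insert kW2 (range kW1))" by (cases x) auto qed

lemma sum_XW: "(\<Sum>k\<in>(UNIV::'d::finite idx_XW set). f k) = f iX + (\<Sum>i\<in>UNIV. f (iW i))"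
  by (simp add: UNIV_XW sum.reindex inj_on_def image_iff add_ac)
lemma sum_WW: "(\<Sum>k\<in>(UNIV::'d::finite idx_WW set). f k) = (\<Sum>i\<in>UNIV. f (jW1 i)) + f jW2"
  by (simp add: UNIV_WW sum.reindex inj_on_def image_iff add_ac)
lemma sum_XWW: "(\<Sum>k\<in>(UNIV::'d::finite idx_XWW set). f k) = f kX + (\<Sum>i\<in>UNIV. f (kW1 i)) + f kW2"
  by (simp add: UNIV_XWW sum.reindex inj_on_def image_iff add_ac)

lemma inner_XW: "v \<bullet> (\<chi> k. fam_XW X W k x) = v $ iX * X x + (\<chi> i. v $ iW i) \<bullet> W x"
  by (simp add: inner_vec_def sum_XW fam_XW_def)
lemma inner_WW: "v \<bullet> (\<chi> k. fam_WW W W2 k x) = (\<chi> i. v $ jW1 i) \<bullet> W x + v $ jW2 * W2 x"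
  by (simp add: inner_vec_def sum_WW fam_WW_def)
lemma inner_XWW: "v \<bullet> (\<chi> k. fam_XWW X W W2 k x) = v $ kX * X x + (\<chi> i. v $ kW1 i) \<bullet> W x + v $ kW2 * W2 x"
  by (simp add: inner_vec_def sum_XWW fam_XWW_def)
lemma chi_wfam: "(\<chi> k. wfam W k x) = W x"
  by (simp add: wfam_def)

lemma UNIV_YXW: "(UNIV :: 'd idx_YXW set) = insert lY (insert lX (range lW))"
proof (rule set_eqI) fix x show "x \<in> UNIV \<longleftrightarrow> x \<in> insert lY (insert lX (range lW))" by (cases x) auto qed
lemma UNIV_YXWW: "(UNIV :: 'd idx_YXWW set) = insert mY (insert mX (insert mW2 (range mW1)))"
proof (rule set_eqI) fix x show "x \<in> UNIV \<longleftrightarrow> x \<in> insert mY (insert mX (insert mW2 (range mW1)))" by (cases x) auto qed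

lemma sum_YXW: "(\<Sum>k\<in>(UNIV::'d::finite idx_YXW set). f k) = f lY + f lX + (\<Sum>i\<in>UNIV. f (lW i))"
  by (simp add: UNIV_YXW sum.reindex inj_on_def image_iff add_ac)
lemma sum_YXWW: "(\<Sum>k\<in>(UNIV::'d::finite idx_YXWW set). f k) = f mY + f mX + (\<Sum>i\<in>UNIV. f (mW1 i)) + f mW2"
  by (simp add: UNIV_YXWW sum.reindex inj_on_def image_iff add_ac)

lemma inner_YXW: "v \<bullet> (\<chi> k. fam_YXW Y X W k x) = v $ lY * Y x + v $ lX * X x + (\<chi> i. v $ lW i) \<bullet> W x"
  by (simp add: inner_vec_def sum_YXW fam_YXW_def)
lemma inner_YXWW: "v \<bullet> (\<chi> k. fam_YXWW Y X W W2 k x) = v $ mY * Y x + v $ mX * X x + (\<chi> i. v $ mW1 i) \<bullet> W x + v $ mW2 * W2 x"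
  by (simp add: inner_vec_def sum_YXWW fam_YXWW_def)

definition qv :: "'a measure \<Rightarrow> ('a \<Rightarrow> real^'d::finite) \<Rightarrow> ('a \<Rightarrow> real) \<Rightarrow> real^'d" where
  "qv M W f = proj_coef M (wfam W) f"
definition res :: "'a measure \<Rightarrow> ('a \<Rightarrow> real^'d::finite) \<Rightarrow> ('a \<Rightarrow> real) \<Rightarrow> 'a \<Rightarrow> real" where
  "res M W f = (\<lambda>x. f x - qv M W f \<bullet> W x)"

locale wsetup = prob_space M for M :: "'a measure" +
  fixes W :: "'a \<Rightarrow> real^'d::finite"
  assumes smW: "\<And>i. second_moment M (\<lambda>x. W x $ i)"
    and pdW: "posdef (covmat M (wfam W))"
begin

lemma smwf: "second_moment M (wfam W k)" using smW by (simp add: wfam_def)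

lemma invW: "invertible (covmat M (wfam W))" using pdW by (rule posdef_invertible)

lemma sm_innerW[simp]: "second_moment M (\<lambda>x. a \<bullet> W x)"
  using sm_inner[of "wfam W" a, OF smwf] by (simp add: chi_wfam)

lemma cov_innerW_left: "second_moment M h \<Longrightarrow> cov M (\<lambda>x. a \<bullet> W x) h = a \<bullet> covvec M (wfam W) h"
  using cov_inner_left[of "wfam W" h a, OF smwf] by (simp add: chi_wfam)

lemma sm_res[simp]: "second_moment M f \<Longrightarrow> second_moment M (res M W f)"
  by (simp add: res_def)

lemma orth_W: "second_moment M f \<Longrightarrow> cov M (\<lambda>x. W x $ i) (res M W f) = 0"
  using proj_orth[OF invW smwf, of f i] by (simp add: chi_wfam res_def qv_def wfam_def)

lemma orth_gen: assumes "second_moment M h" "\<And>i. cov M (\<lambda>x. W x $ i) h = 0"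
  shows "cov M (\<lambda>x. a \<bullet> W x) h = 0"
proof -
  have "covvec M (wfam W) h = 0" using assms(2) by (simp add: covvec_def vec_eq_iff wfam_def)
  then show ?thesis using cov_innerW_left[OF assms(1)] by simp
qed

lemma orth_aW: "second_moment M f \<Longrightarrow> cov M (\<lambda>x. a \<bullet> W x) (res M W f) = 0"
  by (rule orth_gen) (simp_all add: orth_W)

lemma orth_aW': "second_moment M f \<Longrightarrow> cov M (res M W f) (\<lambda>x. a \<bullet> W x) = 0"
  using orth_aW by (simp add: cov_sym)

lemma cov_res_left: assumes "second_moment M f" "second_moment M g"
  shows "cov M (res M W g) (res M W f) = cov M g (res M W f)"
  using assms unfolding res_def[of M W g]
  by (simp add: cov_diff_left orth_aW)

lemma cov_res_right: assumes "second_moment M f" "second_moment M g"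
  shows "cov M (res M W f) (res M W g) = cov M (res M W f) g"
  using cov_res_left[OF assms] by (simp add: cov_sym)

lemma perp_res: "perp M f (wfam W) = res M W f"
  using perp_eq[OF invW] by (simp add: chi_wfam res_def qv_def)

lemma var_qv: assumes "second_moment M f"
  shows "varm M (\<lambda>x. qv M W f \<bullet> W x) = covvec M (wfam W) f \<bullet> qv M W f"
proof -
  have eq: "(\<lambda>x. qv M W f \<bullet> W x) = (\<lambda>x. f x - res M W f x)" by (simp add: res_def)
  have "varm M (\<lambda>x. qv M W f \<bullet> W x) = cov M (\<lambda>x. qv M W f \<bullet> W x) (\<lambda>x. f x - res M W f x)"
    unfolding varm_def by (subst (2) eq) simp
  also have "\<dots> = cov M (\<lambda>x. qv M W f \<bullet> W x) f"
    using assms by (simp add: cov_diff_right orth_aW)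
  also have "\<dots> = covvec M (wfam W) f \<bullet> qv M W f" using assms by (simp add: cov_innerW_left) (rule inner_commute)
  finally show ?thesis .
qed

lemma var_decomp: assumes "second_moment M f"
  shows "varm M f = varm M (\<lambda>x. qv M W f \<bullet> W x) + varm M (res M W f)"
proof -
  have eq: "f = (\<lambda>x. qv M W f \<bullet> W x + res M W f x)" by (simp add: res_def)
  have "varm M f = cov M (\<lambda>x. qv M W f \<bullet> W x + res M W f x) (\<lambda>x. qv M W f \<bullet> W x + res M W f x)"
    unfolding varm_def by (subst eq, subst eq) simp
  also have "\<dots> = varm M (\<lambda>x. qv M W f \<bullet> W x) + varm M (res M W f)"
    using assms by (simp add: cov_add_left cov_add_right orth_aW orth_aW' varm_def)
  finally show ?thesis .
qed

end

locale msetup = prob_space M for M :: "'a measure" +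
  fixes Y X :: "'a \<Rightarrow> real" and W :: "'a \<Rightarrow> real^'d::finite"
  assumes smY[simp]: "second_moment M Y" and smX[simp]: "second_moment M X"
    and smW0: "\<And>i. second_moment M (\<lambda>x. W x $ i)"
    and pd3: "posdef (covmat M (fam_YXW Y X W))"
begin

lemma smfam3: "second_moment M (fam_YXW Y X W k)"
  by (cases k) (simp_all add: fam_YXW_def smW0)

lemma pdW0: "posdef (covmat M (wfam W))"
proof -
  have "wfam W = (\<lambda>j. fam_YXW Y X W (lW j))" by (simp add: fun_eq_iff wfam_def fam_YXW_def)
  then show ?thesis using posdef_sub[OF pd3 smfam3, of lW] by (simp add: inj_on_def)
qed

end

sublocale msetup \<subseteq> wsetup M W
  by unfold_locales (simp_all add: smW0 pdW0)

context msetup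
begin

definition gXW :: "'d idx_XW \<Rightarrow> 'd idx_YXW" where
  "gXW k = (case k of iX \<Rightarrow> lX | iW i \<Rightarrow> lW i)"

lemma pdXW: "posdef (covmat M (fam_XW X W))"
proof -
  have "fam_XW X W = (\<lambda>j. fam_YXW Y X W (gXW j))"
    by (auto simp: fun_eq_iff fam_XW_def fam_YXW_def gXW_def split: idx_XW.splits)
  moreover have "inj gXW" by (auto simp: inj_def gXW_def split: idx_XW.splits)
  ultimately show ?thesis using posdef_sub[OF pd3 smfam3, of gXW] by simp
qed

lemma smXW: "second_moment M (fam_XW X W k)"
  by (cases k) (simp_all add: fam_XW_def smW0)

lemma S7: "cov M (res M W Y) (res M W X) = beta_med M Y X W * varm M (res M W X)"
proof -
  define p where "p = proj_coef M (fam_XW X W) Y"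
  define b where "b = p $ iX"
  define d where "d = (\<chi> i. p $ iW i)"
  define e where "e = (\<lambda>x. Y x - (b * X x + d \<bullet> W x))"
  have sme[simp]: "second_moment M e" by (simp add: e_def)
  have orth: "cov M (fam_XW X W k) e = 0" for k
    using proj_orth[OF posdef_invertible[OF pdXW] smXW smY, of k]
    by (simp add: inner_XW e_def p_def b_def d_def)
  have eX: "cov M X e = 0" using orth[of iX] by (simp add: fam_XW_def)
  have eW: "cov M (\<lambda>x. W x $ i) e = 0" for i using orth[of "iW i"] by (simp add: fam_XW_def)
  have eresX: "cov M e (res M W X) = 0"
    using orth_gen[OF sme eW] eX unfolding res_def by (simp add: cov_diff_right cov_sym)
  have Yeq: "(\<lambda>x. b * X x + d \<bullet> W x + e x) = Y" by (simp add: e_def)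
  have "cov M (res M W Y) (res M W X) = cov M Y (res M W X)" by (simp add: cov_res_left)
  also have "\<dots> = cov M (\<lambda>x. b * X x + d \<bullet> W x + e x) (res M W X)" by (simp add: Yeq)
  also have "\<dots> = b * cov M X (res M W X)"
    by (simp add: cov_add_left cov_scale_left orth_aW eresX)
  also have "cov M X (res M W X) = varm M (res M W X)" by (simp add: cov_res_left varm_def)
  finally show ?thesis by (simp add: beta_med_def b_def p_def)
qed

lemma resY_lin: "res M W Y x = (\<chi> k. case k of lY \<Rightarrow> 1 | lX \<Rightarrow> 0 | lW i \<Rightarrow> - qv M W Y $ i) \<bullet> (\<chi> k. fam_YXW Y X W k x)"
  by (subst inner_YXW) (simp add: res_def inner_vec_def sum_negf)

lemma resX_lin: "res M W X x = (\<chi> k. case k of lY \<Rightarrow> 0 | lX \<Rightarrow> 1 | lW i \<Rightarrow> - qv M W X $ i) \<bullet> (\<chi> k. fam_YXW Y X W k x)"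
  by (subst inner_YXW) (simp add: res_def inner_vec_def sum_negf)

lemma posY: "0 < varm M (res M W Y)"
proof -
  have "(\<chi> k. case k of lY \<Rightarrow> 1 | lX \<Rightarrow> 0 | lW i \<Rightarrow> - qv M W Y $ i) \<noteq> (0::real^'d idx_YXW)"
    unfolding vec_eq_iff by (auto intro!: exI[of _ lY])
  from posdef_var[OF pd3 smfam3 this] show ?thesis by (simp add: resY_lin[symmetric])
qed

lemma posX: "0 < varm M (res M W X)"
proof -
  have "(\<chi> k. case k of lY \<Rightarrow> 0 | lX \<Rightarrow> 1 | lW i \<Rightarrow> - qv M W X $ i) \<noteq> (0::real^'d idx_YXW)"
    unfolding vec_eq_iff by (auto intro!: exI[of _ lX])
  from posdef_var[OF pd3 smfam3 this] show ?thesis by (simp add: resX_lin[symmetric])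
qed

lemma posVx: assumes "covvec M (wfam W) X \<noteq> 0"
  shows "0 < varm M (\<lambda>x. qv M W X \<bullet> W x)"
proof -
  have "qv M W X \<noteq> 0"
    using proj_normal[OF invW, of X] assms by (auto simp: qv_def)
  from posdef_var[OF pdW smwf this] show ?thesis by (simp add: chi_wfam)
qed

end

locale nsetup = prob_space M for M :: "'a measure" +
  fixes Y X W2 :: "'a \<Rightarrow> real" and W :: "'a \<Rightarrow> real^'d::finite"
  assumes smY4[simp]: "second_moment M Y" and smX4[simp]: "second_moment M X"
    and smW24[simp]: "second_moment M W2"
    and smW4: "\<And>i. second_moment M (\<lambda>x. W x $ i)"
    and pd4: "posdef (covmat M (fam_YXWW Y X W W2))"
begin

lemma smfam4: "second_moment M (fam_YXWW Y X W W2 k)"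
  by (cases k) (simp_all add: fam_YXWW_def smW4)

definition g3 :: "'d idx_YXW \<Rightarrow> 'd idx_YXWW" where
  "g3 k = (case k of lY \<Rightarrow> mY | lX \<Rightarrow> mX | lW i \<Rightarrow> mW1 i)"
definition gXWW :: "'d idx_XWW \<Rightarrow> 'd idx_YXWW" where
  "gXWW k = (case k of kX \<Rightarrow> mX | kW1 i \<Rightarrow> mW1 i | kW2 \<Rightarrow> mW2)"
definition gWW :: "'d idx_WW \<Rightarrow> 'd idx_YXWW" where
  "gWW k = (case k of jW1 i \<Rightarrow> mW1 i | jW2 \<Rightarrow> mW2)"

lemma pd3': "posdef (covmat M (fam_YXW Y X W))"
proof -
  have "fam_YXW Y X W = (\<lambda>j. fam_YXWW Y X W W2 (g3 j))"
    by (auto simp: fun_eq_iff fam_YXW_def fam_YXWW_def g3_def split: idx_YXW.splits)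
  moreover have "inj g3" by (auto simp: inj_def g3_def split: idx_YXW.splits)
  ultimately show ?thesis using posdef_sub[OF pd4 smfam4, of g3] by simp
qed

lemma pdXWW: "posdef (covmat M (fam_XWW X W W2))"
proof -
  have "fam_XWW X W W2 = (\<lambda>j. fam_YXWW Y X W W2 (gXWW j))"
    by (auto simp: fun_eq_iff fam_XWW_def fam_YXWW_def gXWW_def split: idx_XWW.splits)
  moreover have "inj gXWW" by (auto simp: inj_def gXWW_def split: idx_XWW.splits)
  ultimately show ?thesis using posdef_sub[OF pd4 smfam4, of gXWW] by simp
qed

lemma pdWW: "posdef (covmat M (fam_WW W W2))"
proof -
  have "fam_WW W W2 = (\<lambda>j. fam_YXWW Y X W W2 (gWW j))"
    by (auto simp: fun_eq_iff fam_WW_def fam_YXWW_def gWW_def split: idx_WW.splits)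
  moreover have "inj gWW" by (auto simp: inj_def gWW_def split: idx_WW.splits)
  ultimately show ?thesis using posdef_sub[OF pd4 smfam4, of gWW] by simp
qed

lemma smXWW: "second_moment M (fam_XWW X W W2 k)"
  by (cases k) (simp_all add: fam_XWW_def smW4)
lemma smWW: "second_moment M (fam_WW W W2 k)"
  by (cases k) (simp_all add: fam_WW_def smW4)

end

sublocale nsetup \<subseteq> msetup M Y X W
  by unfold_locales (simp_all add: smW4 pd3')

context nsetup
begin

lemma S23: "pi2 M X W W2 * varm M (res M W W2) = cov M (res M W X) (res M W W2)"
  "pi1 M X W W2 = qv M W X - pi2 M X W W2 *\<^sub>R qv M W W2"
proof -
  define p where "p = proj_coef M (fam_WW W W2) X"
  define a where "a = (\<chi> i. p $ jW1 i)"
  define t where "t = p $ jW2"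
  define u where "u = (\<lambda>x. X x - (a \<bullet> W x + t * W2 x))"
  have smu[simp]: "second_moment M u" by (simp add: u_def)
  have orth: "cov M (fam_WW W W2 k) u = 0" for k
    using proj_orth[OF posdef_invertible[OF pdWW] smWW smX4, of k]
    by (simp add: inner_WW u_def p_def a_def t_def)
  have uW: "cov M (\<lambda>x. W x $ i) u = 0" for i using orth[of "jW1 i"] by (simp add: fam_WW_def)
  have uW2: "cov M W2 u = 0" using orth[of jW2] by (simp add: fam_WW_def)
  have uresW2: "cov M u (res M W W2) = 0"
    using orth_gen[OF smu uW] uW2 unfolding res_def by (simp add: cov_diff_right cov_sym)
  have Xeq: "(\<lambda>x. a \<bullet> W x + t * W2 x + u x) = X" by (simp add: u_def)
  have "cov M (res M W X) (res M W W2) = cov M X (res M W W2)" by (simp add: cov_res_left)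
  also have "\<dots> = cov M (\<lambda>x. a \<bullet> W x + t * W2 x + u x) (res M W W2)" by (simp add: Xeq)
  also have "\<dots> = t * cov M W2 (res M W W2)"
    by (simp add: cov_add_left cov_scale_left orth_aW uresW2)
  also have "cov M W2 (res M W W2) = varm M (res M W W2)" by (simp add: cov_res_left varm_def)
  finally show "pi2 M X W W2 * varm M (res M W W2) = cov M (res M W X) (res M W W2)"
    by (simp add: pi2_def t_def p_def)
  have "qv M W X = a + t *\<^sub>R qv M W W2"
    unfolding qv_def
  proof (rule proj_unique[OF invW smwf smX4])
    fix i
    have eq: "(\<lambda>x. X x - (a + t *\<^sub>R proj_coef M (wfam W) W2) \<bullet> (\<chi> k. wfam W k x)) = (\<lambda>x. u x + t * res M W W2 x)"
      by (simp add: chi_wfam u_def res_def qv_def inner_add_left algebra_simps)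
    show "cov M (wfam W i) (\<lambda>x. X x - (a + t *\<^sub>R proj_coef M (wfam W) W2) \<bullet> (\<chi> k. wfam W k x)) = 0"
      unfolding eq using uW[of i] orth_W[of W2 i]
      by (simp add: cov_add_right cov_scale_right wfam_def smW4)
  qed
  then show "pi1 M X W W2 = qv M W X - pi2 M X W W2 *\<^sub>R qv M W W2"
    by (simp add: pi1_def pi2_def a_def t_def p_def)
qed

lemma S1: "beta_long M Y X W W2 * (varm M (res M W X) * varm M (res M W W2) - (cov M (res M W X) (res M W W2))\<^sup>2)
   = cov M (res M W Y) (res M W X) * varm M (res M W W2) - cov M (res M W Y) (res M W W2) * cov M (res M W X) (res M W W2)"
proof -
  define p where "p = proj_coef M (fam_XWW X W W2) Y"
  define b where "b = p $ kX"
  define d where "d = (\<chi> i. p $ kW1 i)"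
  define t where "t = p $ kW2"
  define e where "e = (\<lambda>x. Y x - (b * X x + d \<bullet> W x + t * W2 x))"
  have sme[simp]: "second_moment M e" by (simp add: e_def)
  have orth: "cov M (fam_XWW X W W2 k) e = 0" for k
    using proj_orth[OF posdef_invertible[OF pdXWW] smXWW smY4, of k]
    by (simp add: inner_XWW e_def p_def b_def d_def t_def)
  have eX: "cov M X e = 0" using orth[of kX] by (simp add: fam_XWW_def)
  have eW: "cov M (\<lambda>x. W x $ i) e = 0" for i using orth[of "kW1 i"] by (simp add: fam_XWW_def)
  have eW2: "cov M W2 e = 0" using orth[of kW2] by (simp add: fam_XWW_def)
  have eresX: "cov M e (res M W X) = 0"
    using orth_gen[OF sme eW] eX unfolding res_def by (simp add: cov_diff_right cov_sym)
  have eresW2: "cov M e (res M W W2) = 0"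
    using orth_gen[OF sme eW] eW2 unfolding res_def by (simp add: cov_diff_right cov_sym)
  have Yeq: "(\<lambda>x. b * X x + d \<bullet> W x + t * W2 x + e x) = Y" by (simp add: e_def)
  have c1: "cov M (res M W Y) (res M W X) = b * varm M (res M W X) + t * cov M (res M W X) (res M W W2)"
  proof -
    have "cov M (res M W Y) (res M W X) = cov M Y (res M W X)" by (simp add: cov_res_left)
    also have "\<dots> = cov M (\<lambda>x. b * X x + d \<bullet> W x + t * W2 x + e x) (res M W X)" by (simp add: Yeq)
    also have "\<dots> = b * cov M X (res M W X) + t * cov M W2 (res M W X)"
      by (simp add: cov_add_left cov_scale_left orth_aW eresX)
    also have "cov M X (res M W X) = varm M (res M W X)" by (simp add: cov_res_left varm_def)
    also have "cov M W2 (res M W X) = cov M (res M W X) (res M W W2)" by (simp add: cov_res_left[symmetric] cov_sym)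
    finally show ?thesis .
  qed
  have c2: "cov M (res M W Y) (res M W W2) = b * cov M (res M W X) (res M W W2) + t * varm M (res M W W2)"
  proof -
    have "cov M (res M W Y) (res M W W2) = cov M Y (res M W W2)" by (simp add: cov_res_left)
    also have "\<dots> = cov M (\<lambda>x. b * X x + d \<bullet> W x + t * W2 x + e x) (res M W W2)" by (simp add: Yeq)
    also have "\<dots> = b * cov M X (res M W W2) + t * cov M W2 (res M W W2)"
      by (simp add: cov_add_left cov_scale_left orth_aW eresW2)
    also have "cov M W2 (res M W W2) = varm M (res M W W2)" by (simp add: cov_res_left varm_def)
    also have "cov M X (res M W W2) = cov M (res M W X) (res M W W2)" by (simp add: cov_res_left[symmetric])
    finally show ?thesis .
  qed
  show ?thesis unfolding c1 c2 by (simp add: beta_long_def b_def p_def power2_eq_square algebra_simps)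
qed

lemma S5: "R_W2_W1 M W W2 = sqrt (varm M (\<lambda>x. qv M W W2 \<bullet> W x) / varm M W2)"
  unfolding R_W2_W1_def using var_qv[OF smW24] by (simp add: qv_def proj_coef_def)

lemma S6a: "0 < varm M (res M W W2)"
proof -
  define v where "v = (\<chi> k. case k of mY \<Rightarrow> 0 | mX \<Rightarrow> 0 | mW1 i \<Rightarrow> - qv M W W2 $ i | mW2 \<Rightarrow> (1::real))"
  have "v \<noteq> 0" unfolding vec_eq_iff v_def by (auto intro!: exI[of _ mW2])
  have "res M W W2 = (\<lambda>x. v \<bullet> (\<chi> k. fam_YXWW Y X W W2 k x))"
    by (rule ext, subst inner_YXWW) (simp add: res_def inner_vec_def sum_negf v_def)
  with posdef_var[OF pd4 smfam4 \<open>v \<noteq> 0\<close>] show ?thesis by simp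
qed

lemma S6b: "0 < varm M (res M W X) * varm M (res M W W2) - (cov M (res M W X) (res M W W2))\<^sup>2"
proof -
  define t where "t = cov M (res M W X) (res M W W2) / varm M (res M W W2)"
  define v where "v = (\<chi> k. case k of mY \<Rightarrow> 0 | mX \<Rightarrow> 1 | mW1 i \<Rightarrow> - qv M W X $ i + t * qv M W W2 $ i | mW2 \<Rightarrow> - t)"
  have "v \<noteq> 0" unfolding vec_eq_iff v_def by (auto intro!: exI[of _ mX])
  have "(\<lambda>x. res M W X x - t * res M W W2 x) = (\<lambda>x. v \<bullet> (\<chi> k. fam_YXWW Y X W W2 k x))"
    by (rule ext, subst inner_YXWW)
      (simp add: res_def inner_vec_def sum_negf v_def sum_subtractf sum_distrib_left algebra_simps sum.distrib)
  with posdef_var[OF pd4 smfam4 \<open>v \<noteq> 0\<close>] have pos: "0 < varm M (\<lambda>x. res M W X x - t * res M W W2 x)" by simp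
  have e1: "varm M (\<lambda>x. res M W X x - t * res M W W2 x) = varm M (res M W X) - 2 * t * cov M (res M W X) (res M W W2) + t\<^sup>2 * varm M (res M W W2)"
    by (rule varm_lin) simp_all
  have e2: "varm M (res M W X) - 2 * t * cov M (res M W X) (res M W W2) + t\<^sup>2 * varm M (res M W W2) = varm M (res M W X) - (cov M (res M W X) (res M W W2))\<^sup>2 / varm M (res M W W2)"
    using S6a by (simp add: t_def power2_eq_square field_simps)
  have "varm M (\<lambda>x. res M W X x - t * res M W W2 x) = varm M (res M W X) - (cov M (res M W X) (res M W W2))\<^sup>2 / varm M (res M W W2)"
    using e1 e2 by simp
  with pos S6a show ?thesis by (simp add: field_simps)
qed

end

lemma lb_arith:
  fixes b g vx vy vv cxv cyv Vx Vw k p r v1 :: real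
  assumes h1: "b * (vx * vv - cxv\<^sup>2) = g * vv - cyv * cxv" and hb: "b \<le> 0"
    and hdet: "0 < vx * vv - cxv\<^sup>2" and hp: "p * vv = cxv" and hcs: "cyv\<^sup>2 \<le> vy * vv"
    and hk: "k\<^sup>2 \<le> Vx * Vw" and hw: "Vw + vv = 1" and hg: "0 \<le> g" and hvv: "0 < vv"
    and hVx: "0 < Vx" and hvy: "0 < vy" and hr: "0 \<le> r"
    and hv1: "v1 = Vx - 2 * p * k + p\<^sup>2 * Vw" and hv1p: "0 \<le> v1"
    and hA: "\<bar>p\<bar> \<le> r * sqrt v1"
  shows "sqrt (g\<^sup>2 / (Vx * vy + g\<^sup>2)) \<le> r"
proof -
  have s1: "g * vv \<le> cyv * cxv"
  proof -
    have "b * (vx * vv - cxv\<^sup>2) \<le> 0" using hb hdet by (simp add: mult_nonpos_nonneg)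
    then show ?thesis using h1 by simp
  qed
  have s2: "(g * vv)\<^sup>2 \<le> (cyv * cxv)\<^sup>2"
    using s1 hg hvv by (intro power_mono) auto
  have s3: "(cyv * cxv)\<^sup>2 \<le> vy * vv * cxv\<^sup>2"
    using hcs by (simp add: power_mult_distrib mult_right_mono)
  define A where "A = p\<^sup>2 * vv"
  have s4: "g\<^sup>2 \<le> vy * A"
  proof -
    have "(g * vv)\<^sup>2 \<le> vy * vv * cxv\<^sup>2" using s2 s3 by linarith
    then have "g\<^sup>2 * vv * vv \<le> vy * vv * cxv\<^sup>2" by (simp add: power_mult_distrib power2_eq_square ac_simps)
    also have "\<dots> = vy * A * vv * vv" using hp by (simp add: A_def power2_eq_square algebra_simps flip: hp)
    finally show ?thesis using hvv by simp
  qed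
  have s5: "vv * v1 \<le> Vx + A"
  proof -
    have "0 \<le> (k + vv * p)\<^sup>2" by simp
    then have "0 \<le> Vx * Vw + 2 * vv * p * k + (vv * p)\<^sup>2" using hk by (simp add: power2_sum algebra_simps)
    moreover have "Vx + A - vv * v1 = Vx * Vw + 2 * vv * p * k + (vv * p)\<^sup>2"
    proof -
      have hw': "Vw = 1 - vv" using hw by simp
      show ?thesis by (simp add: hv1 A_def hw' power2_eq_square algebra_simps)
    qed
    ultimately show ?thesis by simp
  qed
  have s6: "p\<^sup>2 \<le> r\<^sup>2 * v1"
  proof -
    have "p\<^sup>2 = \<bar>p\<bar>\<^sup>2" by simp
    also have "\<dots> \<le> (r * sqrt v1)\<^sup>2" using hA by (intro power_mono) auto
    also have "\<dots> = r\<^sup>2 * v1" using hv1p by (simp add: power_mult_distrib)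
    finally show ?thesis .
  qed
  have s7: "A \<le> r\<^sup>2 * (Vx + A)"
  proof -
    have "A \<le> r\<^sup>2 * v1 * vv" unfolding A_def using s6 hvv by (simp add: mult_right_mono)
    also have "\<dots> = r\<^sup>2 * (vv * v1)" by simp
    also have "\<dots> \<le> r\<^sup>2 * (Vx + A)" using s5 by (intro mult_left_mono) auto
    finally show ?thesis .
  qed
  have Apos: "0 \<le> A" unfolding A_def using hvv by simp
  have s8: "g\<^sup>2 / (Vx * vy + g\<^sup>2) \<le> A / (Vx + A)"
  proof -
    have d1: "0 < Vx * vy + g\<^sup>2" using hVx hvy by (simp add: add_pos_nonneg)
    have d2: "0 < Vx + A" using hVx Apos by simp
    have "g\<^sup>2 * Vx \<le> vy * A * Vx" using s4 hVx by (simp add: mult_right_mono)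
    then have "g\<^sup>2 * (Vx + A) \<le> A * (Vx * vy + g\<^sup>2)" by (simp add: algebra_simps)
    then show ?thesis using d1 d2 by (simp add: divide_le_eq le_divide_eq mult.commute)
  qed
  have s9: "A / (Vx + A) \<le> r\<^sup>2" using s7 hVx Apos by (simp add: divide_le_eq)
  have "sqrt (g\<^sup>2 / (Vx * vy + g\<^sup>2)) \<le> sqrt (r\<^sup>2)" using s8 s9 by (intro real_sqrt_le_mono) simp
  then show ?thesis using hr by simp
qed

context nsetup
begin

lemma varm_scale: "second_moment M f \<Longrightarrow> varm M (\<lambda>x. c * f x) = c\<^sup>2 * varm M f"
  by (simp add: varm_def cov_scale_left cov_scale_right power2_eq_square)

lemma LB:
  assumes bl: "beta_long M Y X W W2 \<le> 0" and v1: "varm M W2 = 1" and arx: "A_rx r M X W W2"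
    and r0: "0 \<le> r" and bm: "0 \<le> beta_med M Y X W"
    and Vx: "0 < varm M (\<lambda>x. qv M W X \<bullet> W x)"
  shows "sqrt ((cov M (res M W Y) (res M W X))\<^sup>2 /
        (varm M (\<lambda>x. qv M W X \<bullet> W x) * varm M (res M W Y) + (cov M (res M W Y) (res M W X))\<^sup>2)) \<le> r"
proof (rule lb_arith[OF S1 bl S6b S23(1)])
  show "(cov M (res M W Y) (res M W W2))\<^sup>2 \<le> varm M (res M W Y) * varm M (res M W W2)"
    by (rule cov_CS) simp_all
  show "(cov M (\<lambda>x. qv M W X \<bullet> W x) (\<lambda>x. qv M W W2 \<bullet> W x))\<^sup>2 \<le> varm M (\<lambda>x. qv M W X \<bullet> W x) * varm M (\<lambda>x. qv M W W2 \<bullet> W x)"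
    by (rule cov_CS) simp_all
  show "varm M (\<lambda>x. qv M W W2 \<bullet> W x) + varm M (res M W W2) = 1"
    using var_decomp[OF smW24] v1 by simp
  show "0 \<le> cov M (res M W Y) (res M W X)"
    using S7 bm posX by simp
  show "0 < varm M (res M W W2)" by (rule S6a)
  show "0 < varm M (\<lambda>x. qv M W X \<bullet> W x)" by (rule Vx)
  show "0 < varm M (res M W Y)" by (rule posY)
  show "0 \<le> r" by (rule r0)
  have pe: "(\<lambda>x. pi1 M X W W2 \<bullet> W x) = (\<lambda>x. qv M W X \<bullet> W x - pi2 M X W W2 * (qv M W W2 \<bullet> W x))"
    by (simp add: S23(2) inner_diff_left)
  show "varm M (\<lambda>x. pi1 M X W W2 \<bullet> W x) = varm M (\<lambda>x. qv M W X \<bullet> W x) - 2 * pi2 M X W W2 * cov M (\<lambda>x. qv M W X \<bullet> W x) (\<lambda>x. qv M W W2 \<bullet> W x) + (pi2 M X W W2)\<^sup>2 * varm M (\<lambda>x. qv M W W2 \<bullet> W x)"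
    unfolding pe by (rule varm_lin) simp_all
  show "0 \<le> varm M (\<lambda>x. pi1 M X W W2 \<bullet> W x)" by (rule varm_nonneg)
  have "sqrt (varm M (\<lambda>x. pi2 M X W W2 * W2 x)) = \<bar>pi2 M X W W2\<bar>"
    by (simp add: varm_scale v1)
  then show "\<bar>pi2 M X W W2\<bar> \<le> r * sqrt (varm M (\<lambda>x. pi1 M X W W2 \<bullet> W x))"
    using arx by (simp add: A_rx_def)
qed

end

lemma meas_vec: fixes f :: "'a \<Rightarrow> real^'d::finite"
  assumes "\<And>i. (\<lambda>x. f x $ i) \<in> borel_measurable M" shows "f \<in> borel_measurable M"
  by (subst borel_measurable_euclidean_space) (auto simp: Basis_vec_def inner_axis assms)

lemma cY_eq: "cY = fst" by (auto simp: fun_eq_iff cY_def split: prod.splits)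
lemma cX_eq: "cX = (\<lambda>v. fst (snd v))" by (auto simp: fun_eq_iff cX_def split: prod.splits)
lemma cW1_eq: "cW1 = (\<lambda>v. fst (snd (snd v)))" by (auto simp: fun_eq_iff cW1_def split: prod.splits)
lemma cW2_eq: "cW2 = (\<lambda>v. snd (snd (snd v)))" by (auto simp: fun_eq_iff cW2_def split: prod.splits)

lemma psi_borel: "(\<lambda>v::real\<times>real\<times>(real^'d::finite)\<times>real. (cY v, cX v, cW1 v)) \<in> borel_measurable borel"
  unfolding cY_eq cX_eq cW1_eq by (intro borel_measurable_continuous_onI continuous_intros)
lemma cW2_borel: "(cW2 :: real\<times>real\<times>(real^'d::finite)\<times>real \<Rightarrow> real) \<in> borel_measurable borel"
  unfolding cW2_eq by (intro borel_measurable_continuous_onI continuous_intros)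

lemma cont_meas: "continuous_on UNIV f \<Longrightarrow> f \<in> borel_measurable borel"
  by (rule borel_measurable_continuous_onI)

context msetup
begin

lemma formula_eq: assumes "covvec M (wfam W) X \<noteq> 0"
  shows "(let R2xw = rsq M X (wfam W);
              R2yxw = (beta_med M Y X W)\<^sup>2 * varm M (perp M X (wfam W)) / varm M (perp M Y (wfam W))
          in sqrt (R2yxw / (R2xw / (1 - R2xw) + R2yxw)))
       = sqrt ((cov M (res M W Y) (res M W X))\<^sup>2 /
        (varm M (\<lambda>x. qv M W X \<bullet> W x) * varm M (res M W Y) + (cov M (res M W Y) (res M W X))\<^sup>2))"
proof -
  define Vx where "Vx = varm M (\<lambda>x. qv M W X \<bullet> W x)"
  define vx where "vx = varm M (res M W X)"
  define vy where "vy = varm M (res M W Y)"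
  define g where "g = cov M (res M W Y) (res M W X)"
  have Vx: "0 < Vx" using posVx[OF assms] by (simp add: Vx_def)
  have vx: "0 < vx" using posX by (simp add: vx_def)
  have vy: "0 < vy" using posY by (simp add: vy_def)
  have r1: "rsq M X (wfam W) = Vx / (Vx + vx)"
    unfolding rsq_def using var_decomp[OF smX] by (simp add: chi_wfam qv_def Vx_def vx_def)
  have bm: "beta_med M Y X W = g / vx" using S7 vx by (simp add: g_def vx_def field_simps)
  have "(let R2xw = rsq M X (wfam W);
              R2yxw = (beta_med M Y X W)\<^sup>2 * varm M (perp M X (wfam W)) / varm M (perp M Y (wfam W))
          in sqrt (R2yxw / (R2xw / (1 - R2xw) + R2yxw)))
      = sqrt (((g / vx)\<^sup>2 * vx / vy) / ((Vx / (Vx + vx)) / (1 - Vx / (Vx + vx)) + (g / vx)\<^sup>2 * vx / vy))"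
    by (simp add: r1 bm perp_res vx_def vy_def Let_def)
  also have "((g / vx)\<^sup>2 * vx / vy) / ((Vx / (Vx + vx)) / (1 - Vx / (Vx + vx)) + (g / vx)\<^sup>2 * vx / vy)
      = g\<^sup>2 / (Vx * vy + g\<^sup>2)"
  proof -
    have h1: "1 - Vx / (Vx + vx) = vx / (Vx + vx)" using Vx vx by (simp add: field_simps)
    have gen: "\<And>a b c::real. c \<noteq> 0 \<Longrightarrow> (a / c) / (b / c) = a / b" by (simp add: divide_divide_times_eq)
    have h2: "(Vx / (Vx + vx)) / (vx / (Vx + vx)) = Vx / vx" using Vx vx by (intro gen) simp
    have h3: "(g / vx)\<^sup>2 * vx / vy = g\<^sup>2 / (vx * vy)" using vx vy by (simp add: field_simps power2_eq_square)
    show ?thesis unfolding h1 h2 h3 using Vx vx vy by (simp add: field_simps)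
  qed
  finally show ?thesis by (simp add: Vx_def vy_def g_def)
qed

end

locale tsetup = msetup M Y X W for M :: "'a measure" and Y X and W :: "'a \<Rightarrow> real^'d::finite" +
  fixes N :: "(real \<times> real \<times> (real^'d) \<times> real) measure"
  assumes pN: "prob_space N" and sN: "sets N = sets borel"
    and dN: "distr N borel (\<lambda>v. (cY v, cX v, cW1 v)) = distr M borel (\<lambda>w. (Y w, X w, W w))"
begin

lemma psi_meas: "(\<lambda>v. (cY v, cX v, cW1 v)) \<in> borel_measurable N"
  using psi_borel measurable_cong_sets[OF sN refl] by blast

lemma phi_meas: "(\<lambda>w. (Y w, X w, W w)) \<in> borel_measurable M"
  using smW0 sm_meas[OF smY] sm_meas[OF smX] by (intro borel_measurable_Pair meas_vec) (auto simp: second_moment_def)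

lemma tr_int: fixes F :: "real \<times> real \<times> (real^'d) \<Rightarrow> real" assumes "F \<in> borel_measurable borel"
  shows "integral\<^sup>L N (\<lambda>v. F (cY v, cX v, cW1 v)) = integral\<^sup>L M (\<lambda>w. F (Y w, X w, W w))"
proof -
  have "integral\<^sup>L N (\<lambda>v. F (cY v, cX v, cW1 v)) = integral\<^sup>L (distr N borel (\<lambda>v. (cY v, cX v, cW1 v))) F"
    by (rule integral_distr[OF psi_meas assms, symmetric])
  also have "\<dots> = integral\<^sup>L M (\<lambda>w. F (Y w, X w, W w))"
    unfolding dN by (rule integral_distr[OF phi_meas assms])
  finally show ?thesis .
qed

lemma tr_cov: fixes F G :: "real \<times> real \<times> (real^'d) \<Rightarrow> real" assumes F: "F \<in> borel_measurable borel" and G: "G \<in> borel_measurable borel"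
  shows "cov N (\<lambda>v. F (cY v, cX v, cW1 v)) (\<lambda>v. G (cY v, cX v, cW1 v)) = cov M (\<lambda>w. F (Y w, X w, W w)) (\<lambda>w. G (Y w, X w, W w))"
proof -
  have mF: "mean N (\<lambda>v. F (cY v, cX v, cW1 v)) = mean M (\<lambda>w. F (Y w, X w, W w))"
    unfolding mean_def by (rule tr_int[OF F])
  have mG: "mean N (\<lambda>v. G (cY v, cX v, cW1 v)) = mean M (\<lambda>w. G (Y w, X w, W w))"
    unfolding mean_def by (rule tr_int[OF G])
  define H where "H = (\<lambda>t. (F t - mean M (\<lambda>w. F (Y w, X w, W w))) * (G t - mean M (\<lambda>w. G (Y w, X w, W w))))"
  have HM: "H \<in> borel_measurable borel" unfolding H_def using F G by measurable
  from tr_int[OF HM] show ?thesis unfolding cov_def mF mG H_def by (simp add: mean_def)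
qed

lemma tr_sm: fixes F :: "real \<times> real \<times> (real^'d) \<Rightarrow> real" assumes F: "F \<in> borel_measurable borel"
  shows "second_moment N (\<lambda>v. F (cY v, cX v, cW1 v)) \<longleftrightarrow> second_moment M (\<lambda>w. F (Y w, X w, W w))"
proof -
  have m1: "(\<lambda>v. F (cY v, cX v, cW1 v)) \<in> borel_measurable N"
    using measurable_compose[OF psi_meas F] by simp
  have m2: "(\<lambda>w. F (Y w, X w, W w)) \<in> borel_measurable M"
    using measurable_compose[OF phi_meas F] by simp
  have F2: "(\<lambda>t. (F t)\<^sup>2) \<in> borel_measurable borel" using F by measurable
  have "integrable N (\<lambda>v. (F (cY v, cX v, cW1 v))\<^sup>2) \<longleftrightarrow> integrable (distr N borel (\<lambda>v. (cY v, cX v, cW1 v))) (\<lambda>t. (F t)\<^sup>2)"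
    by (rule integrable_distr_eq[OF psi_meas F2, symmetric])
  also have "\<dots> \<longleftrightarrow> integrable M (\<lambda>w. (F (Y w, X w, W w))\<^sup>2)"
    unfolding dN by (rule integrable_distr_eq[OF phi_meas F2])
  finally show ?thesis using m1 m2 by (simp add: second_moment_def)
qed

lemma smN_Y[simp]: "second_moment N cY"
proof -
  have "(fst :: real \<times> real \<times> (real^'d) \<Rightarrow> real) \<in> borel_measurable borel" by (rule cont_meas) (intro continuous_intros)
  from tr_sm[OF this] show ?thesis by simp
qed

lemma tr_covc: fixes F G :: "real \<times> real \<times> (real^'d) \<Rightarrow> real"
  assumes "continuous_on UNIV F" "continuous_on UNIV G"
  shows "cov N (\<lambda>v. F (cY v, cX v, cW1 v)) (\<lambda>v. G (cY v, cX v, cW1 v)) = cov M (\<lambda>w. F (Y w, X w, W w)) (\<lambda>w. G (Y w, X w, W w))"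
  using tr_cov[OF cont_meas[OF assms(1)] cont_meas[OF assms(2)]] .

lemma tr_smc: fixes F :: "real \<times> real \<times> (real^'d) \<Rightarrow> real"
  assumes "continuous_on UNIV F"
  shows "second_moment N (\<lambda>v. F (cY v, cX v, cW1 v)) \<longleftrightarrow> second_moment M (\<lambda>w. F (Y w, X w, W w))"
  using tr_sm[OF cont_meas[OF assms]] .

lemma smN_X[simp]: "second_moment N cX"
  using tr_smc[of "\<lambda>t. fst (snd t)"] by (simp add: continuous_intros)

lemma smN_W: "second_moment N (\<lambda>v. cW1 v $ i)"
  using tr_smc[of "\<lambda>t. snd (snd t) $ i"] smW0[of i] by (simp add: continuous_intros)

lemma covW_eq: "covmat N (wfam cW1) = covmat M (wfam W)"
  using tr_covc[of "\<lambda>t. snd (snd t) $ _" "\<lambda>t. snd (snd t) $ _"]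
  by (simp add: covmat_def vec_eq_iff wfam_def continuous_intros)

lemma covvec_eqY: "covvec N (wfam cW1) cY = covvec M (wfam W) Y"
  using tr_covc[of "\<lambda>t. snd (snd t) $ _" "fst"]
  by (simp add: covvec_def vec_eq_iff wfam_def continuous_intros)

lemma covvec_eqX: "covvec N (wfam cW1) cX = covvec M (wfam W) X"
  using tr_covc[of "\<lambda>t. snd (snd t) $ _" "\<lambda>t. fst (snd t)"]
  by (simp add: covvec_def vec_eq_iff wfam_def continuous_intros)

lemma pdWN: "posdef (covmat N (wfam cW1))"
  using pdW by (simp add: covW_eq)

lemma qvY: "qv N cW1 cY = qv M W Y"
  by (simp add: qv_def proj_coef_def covW_eq covvec_eqY)
lemma qvX: "qv N cW1 cX = qv M W X"
  by (simp add: qv_def proj_coef_def covW_eq covvec_eqX)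

end

sublocale tsetup \<subseteq> Nw: wsetup N cW1
  by (rule wsetup.intro[OF pN]) (rule wsetup_axioms.intro[OF smN_W pdWN])

context tsetup
begin

lemma resY_N: "res N cW1 cY = (\<lambda>v. (\<lambda>t. fst t - qv M W Y \<bullet> snd (snd t)) (cY v, cX v, cW1 v))"
  by (simp add: res_def qvY)
lemma resX_N: "res N cW1 cX = (\<lambda>v. (\<lambda>t. fst (snd t) - qv M W X \<bullet> snd (snd t)) (cY v, cX v, cW1 v))"
  by (simp add: res_def qvX)
lemma resY_M: "res M W Y = (\<lambda>w. (\<lambda>t. fst t - qv M W Y \<bullet> snd (snd t)) (Y w, X w, W w))"
  by (simp add: res_def)
lemma resX_M: "res M W X = (\<lambda>w. (\<lambda>t. fst (snd t) - qv M W X \<bullet> snd (snd t)) (Y w, X w, W w))"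
  by (simp add: res_def)

lemma vyN: "varm N (res N cW1 cY) = varm M (res M W Y)"
  unfolding varm_def resY_N resY_M by (rule tr_covc) (intro continuous_intros)+
lemma vxN: "varm N (res N cW1 cX) = varm M (res M W X)"
  unfolding varm_def resX_N resX_M by (rule tr_covc) (intro continuous_intros)+
lemma gN: "cov N (res N cW1 cY) (res N cW1 cX) = cov M (res M W Y) (res M W X)"
  unfolding resX_N resX_M resY_N resY_M by (rule tr_covc) (intro continuous_intros)+
lemma VxN: "varm N (\<lambda>v. qv N cW1 cX \<bullet> cW1 v) = varm M (\<lambda>w. qv M W X \<bullet> W w)"
  using tr_covc[of "\<lambda>t. qv M W X \<bullet> snd (snd t)" "\<lambda>t. qv M W X \<bullet> snd (snd t)"]
  by (simp add: varm_def qvX continuous_intros)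

definition FXW :: "'d idx_XW \<Rightarrow> real \<times> real \<times> (real^'d) \<Rightarrow> real" where
  "FXW k = (case k of iX \<Rightarrow> (\<lambda>t. fst (snd t)) | iW i \<Rightarrow> (\<lambda>t. snd (snd t) $ i))"

lemma FXW_cont: "continuous_on UNIV (FXW k)"
  by (cases k) (simp_all add: FXW_def continuous_intros)

lemma famXW_N: "fam_XW cX cW1 k = (\<lambda>v. FXW k (cY v, cX v, cW1 v))"
  by (cases k) (simp_all add: FXW_def fam_XW_def)
lemma famXW_M: "fam_XW X W k = (\<lambda>w. FXW k (Y w, X w, W w))"
  by (cases k) (simp_all add: FXW_def fam_XW_def)

lemma bmN: "beta_med N cY cX cW1 = beta_med M Y X W"
proof -
  have c1: "covmat N (fam_XW cX cW1) = covmat M (fam_XW X W)"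
    unfolding covmat_def vec_eq_iff using tr_covc[OF FXW_cont FXW_cont]
    by (simp add: famXW_N famXW_M)
  have c2: "covvec N (fam_XW cX cW1) cY = covvec M (fam_XW X W) Y"
    unfolding covvec_def vec_eq_iff using tr_covc[OF FXW_cont, of fst]
    by (simp add: famXW_N famXW_M continuous_intros)
  show ?thesis by (simp add: beta_med_def proj_coef_def c1 c2)
qed

lemma LB_t:
  assumes A1N: "A1 N cY cX cW1 cW2" and smW2: "second_moment N cW2" and v1: "varm N cW2 = 1"
    and arx: "A_rx r N cX cW1 cW2" and r0: "0 \<le> r" and bl: "beta_long N cY cX cW1 cW2 \<le> 0"
    and bm: "0 \<le> beta_med M Y X W" and cv: "covvec M (wfam W) X \<noteq> 0"
  shows "sqrt ((cov M (res M W Y) (res M W X))\<^sup>2 /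
        (varm M (\<lambda>x. qv M W X \<bullet> W x) * varm M (res M W Y) + (cov M (res M W Y) (res M W X))\<^sup>2)) \<le> r"
proof -
  interpret NN: nsetup N cY cX cW2 cW1
    by (rule nsetup.intro[OF pN]) (rule nsetup_axioms.intro, simp_all add: smW2 smN_W A1N[unfolded A1_def])
  have "sqrt ((cov N (res N cW1 cY) (res N cW1 cX))\<^sup>2 /
        (varm N (\<lambda>x. qv N cW1 cX \<bullet> cW1 x) * varm N (res N cW1 cY) + (cov N (res N cW1 cY) (res N cW1 cX))\<^sup>2)) \<le> r"
    by (rule NN.LB[OF bl v1 arx r0]) (simp_all add: bmN bm VxN posVx[OF cv])
  then show ?thesis by (simp add: gN VxN vyN)
qed

end

definition Pz :: "real measure" where "Pz = measure_pmf (pmf_of_set {-1, 1})"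

lemma Pz_id_meas[measurable]: "(\<lambda>z. z) \<in> borel_measurable Pz"
  unfolding Pz_def by simp

lemma snd_meas_Pz: "snd \<in> borel_measurable (M \<Otimes>\<^sub>M Pz)"
  by (rule measurable_compose[OF measurable_snd Pz_id_meas])

lemma prob_Pz: "prob_space Pz" unfolding Pz_def by (rule prob_space_measure_pmf)

lemma mix:
  fixes f :: "'a \<times> real \<Rightarrow> real"
  assumes M: "prob_space M" and f: "f \<in> borel_measurable (M \<Otimes>\<^sub>M Pz)"
    and i1: "integrable M (\<lambda>x. f (x, 1))" and i2: "integrable M (\<lambda>x. f (x, -1))"
  shows "integrable (M \<Otimes>\<^sub>M Pz) f"
    "integral\<^sup>L (M \<Otimes>\<^sub>M Pz) f = (integral\<^sup>L M (\<lambda>x. f (x, 1)) + integral\<^sup>L M (\<lambda>x. f (x, -1))) / 2"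
proof -
  interpret pair_sigma_finite M Pz
    by (intro pair_sigma_finite.intro prob_space_imp_sigma_finite M prob_Pz)
  have S: "set_pmf (pmf_of_set {-1::real, 1}) = {-1, 1}" by (simp add: set_pmf_of_set)
  have intP: "\<And>g :: real \<Rightarrow> real. integral\<^sup>L Pz g = (g 1 + g (-1)) / 2"
    unfolding Pz_def by (subst integral_pmf_of_set) auto
  have iP: "\<And>g :: real \<Rightarrow> real. integrable Pz g"
    unfolding Pz_def by (rule integrable_measure_pmf_finite) (simp add: S)
  show I: "integrable (M \<Otimes>\<^sub>M Pz) f"
  proof (rule Fubini_integrable[OF f])
    show "integrable M (\<lambda>x. LINT y|Pz. norm (f (x, y)))"
      unfolding intP using i1 i2 by auto
    show "AE x in M. integrable Pz (\<lambda>y. f (x, y))" by (simp add: iP)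
  qed
  have "integral\<^sup>L (M \<Otimes>\<^sub>M Pz) f = (\<integral>x. (\<integral>y. f (x, y) \<partial>Pz) \<partial>M)"
    using integral_fst'[OF I] by simp
  also have "\<dots> = (\<integral>x. (f (x, 1) + f (x, -1)) / 2 \<partial>M)" by (simp add: intP)
  also have "\<dots> = (integral\<^sup>L M (\<lambda>x. f (x, 1)) + integral\<^sup>L M (\<lambda>x. f (x, -1))) / 2"
    using i1 i2 by simp
  finally show "integral\<^sup>L (M \<Otimes>\<^sub>M Pz) f = (integral\<^sup>L M (\<lambda>x. f (x, 1)) + integral\<^sup>L M (\<lambda>x. f (x, -1))) / 2" .
qed

context msetup
begin

definition Hf :: "real \<Rightarrow> real \<Rightarrow> real \<Rightarrow> real \<times> real \<times> (real^'d) \<Rightarrow> real" where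
  "Hf \<alpha> b \<delta> = (\<lambda>t. \<alpha> * (fst t - qv M W Y \<bullet> snd (snd t)) + b * (fst (snd t) - qv M W X \<bullet> snd (snd t))
      + \<delta> * (qv M W X \<bullet> snd (snd t)))"

lemma Hf_cont: "continuous_on UNIV (Hf \<alpha> b \<delta>)"
  unfolding Hf_def by (intro continuous_intros)

lemma Hf_M: "(\<lambda>w. Hf \<alpha> b \<delta> (Y w, X w, W w)) = (\<lambda>w. \<alpha> * res M W Y w + b * res M W X w + \<delta> * (qv M W X \<bullet> W w))"
  by (simp add: Hf_def res_def fun_eq_iff)

lemma sm_Hf: "second_moment M (\<lambda>w. Hf \<alpha> b \<delta> (Y w, X w, W w))"
  unfolding Hf_M by simp

lemma W_meas: "W \<in> borel_measurable M"
  using smW0 by (intro meas_vec) (auto simp: second_moment_def)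

definition Phi :: "real \<Rightarrow> real \<Rightarrow> real \<Rightarrow> real \<Rightarrow> 'a \<times> real \<Rightarrow> real \<times> real \<times> (real^'d) \<times> real" where
  "Phi \<alpha> b \<delta> \<sigma> = (\<lambda>p. (Y (fst p), X (fst p), W (fst p), Hf \<alpha> b \<delta> (Y (fst p), X (fst p), W (fst p)) + \<sigma> * snd p))"

lemma Phi_meas: "Phi \<alpha> b \<delta> \<sigma> \<in> borel_measurable (M \<Otimes>\<^sub>M Pz)"
proof -
  have Y': "(\<lambda>p. Y (fst p)) \<in> borel_measurable (M \<Otimes>\<^sub>M Pz)"
    by (rule measurable_compose[OF measurable_fst]) (simp add: sm_meas)
  have X': "(\<lambda>p. X (fst p)) \<in> borel_measurable (M \<Otimes>\<^sub>M Pz)"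
    by (rule measurable_compose[OF measurable_fst]) (simp add: sm_meas)
  have W': "(\<lambda>p. W (fst p)) \<in> borel_measurable (M \<Otimes>\<^sub>M Pz)"
    by (rule measurable_compose[OF measurable_fst W_meas])
  have T: "(\<lambda>p. (Y (fst p), X (fst p), W (fst p))) \<in> borel_measurable (M \<Otimes>\<^sub>M Pz)"
    by (intro borel_measurable_Pair Y' X' W')
  have H: "(\<lambda>p. Hf \<alpha> b \<delta> (Y (fst p), X (fst p), W (fst p))) \<in> borel_measurable (M \<Otimes>\<^sub>M Pz)"
    by (rule measurable_compose[OF T cont_meas[OF Hf_cont]])
  show ?thesis unfolding Phi_def
    by (intro borel_measurable_Pair borel_measurable_add borel_measurable_times Y' X' W' H
        borel_measurable_const snd_meas_Pz)
qed

definition NC where "NC \<alpha> b \<delta> \<sigma> = distr (M \<Otimes>\<^sub>M Pz) borel (Phi \<alpha> b \<delta> \<sigma>)"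

lemma prob_MP: "prob_space (M \<Otimes>\<^sub>M Pz)"
  by (rule prob_space_pair[OF prob_space_axioms prob_Pz])

lemma NC_tsetup: "tsetup M Y X W (NC \<alpha> b \<delta> \<sigma>)"
proof -
  have p: "prob_space (NC \<alpha> b \<delta> \<sigma>)"
    unfolding NC_def by (rule prob_space.prob_space_distr[OF prob_MP Phi_meas])
  have s: "sets (NC \<alpha> b \<delta> \<sigma>) = sets borel" by (simp add: NC_def)
  have phi: "(\<lambda>w. (Y w, X w, W w)) \<in> borel_measurable M"
    using smW0 sm_meas[OF smY] sm_meas[OF smX] by (intro borel_measurable_Pair meas_vec) (auto simp: second_moment_def)
  have "distr (NC \<alpha> b \<delta> \<sigma>) borel (\<lambda>v. (cY v, cX v, cW1 v))
      = distr (M \<Otimes>\<^sub>M Pz) borel ((\<lambda>v. (cY v, cX v, cW1 v)) \<circ> Phi \<alpha> b \<delta> \<sigma>)"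
    unfolding NC_def by (rule distr_distr[OF psi_borel Phi_meas])
  also have "(\<lambda>v. (cY v, cX v, cW1 v)) \<circ> Phi \<alpha> b \<delta> \<sigma> = (\<lambda>w. (Y w, X w, W w)) \<circ> fst"
    by (simp add: fun_eq_iff Phi_def cY_def cX_def cW1_def)
  also have "distr (M \<Otimes>\<^sub>M Pz) borel ((\<lambda>w. (Y w, X w, W w)) \<circ> fst) = distr (distr (M \<Otimes>\<^sub>M Pz) M fst) borel (\<lambda>w. (Y w, X w, W w))"
    by (rule distr_distr[OF phi measurable_fst, symmetric])
  also have "distr (M \<Otimes>\<^sub>M Pz) M fst = M"
    by (rule prob_space.distr_pair_fst[OF prob_Pz])
  finally show ?thesis
    by (intro tsetup.intro msetup_axioms tsetup_axioms.intro p s) (simp add: prob_space_axioms msetup_def)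
qed

definition Zn :: "real \<Rightarrow> real \<Rightarrow> real \<Rightarrow> real \<Rightarrow> real \<times> real \<times> (real^'d) \<times> real \<Rightarrow> real" where
  "Zn \<alpha> b \<delta> \<sigma> = (\<lambda>v. (cW2 v - Hf \<alpha> b \<delta> (cY v, cX v, cW1 v)) / \<sigma>)"

lemma Zn_cont: "continuous_on UNIV (Zn \<alpha> b \<delta> \<sigma>)"
proof -
  have "continuous_on UNIV (\<lambda>v::real \<times> real \<times> (real^'d) \<times> real. Hf \<alpha> b \<delta> (cY v, cX v, cW1 v))"
    by (rule continuous_on_compose2[OF Hf_cont]) (auto simp: cY_eq cX_eq cW1_eq intro!: continuous_intros)
  then show ?thesis unfolding Zn_def cW2_eq divide_inverse by (intro continuous_intros)
qed

lemma Phi_simps: "cY (Phi \<alpha> b \<delta> \<sigma> p) = Y (fst p)" "cX (Phi \<alpha> b \<delta> \<sigma> p) = X (fst p)"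
  "cW1 (Phi \<alpha> b \<delta> \<sigma> p) = W (fst p)"
  "cW2 (Phi \<alpha> b \<delta> \<sigma> p) = Hf \<alpha> b \<delta> (Y (fst p), X (fst p), W (fst p)) + \<sigma> * snd p"
  by (simp_all add: Phi_def cY_def cX_def cW1_def cW2_def)

lemma Zn_Phi: "\<sigma> \<noteq> 0 \<Longrightarrow> Zn \<alpha> b \<delta> \<sigma> (Phi \<alpha> b \<delta> \<sigma> p) = snd p"
  by (simp add: Zn_def Phi_simps)

lemma cW2_Zn: "\<sigma> \<noteq> 0 \<Longrightarrow> cW2 v = Hf \<alpha> b \<delta> (cY v, cX v, cW1 v) + \<sigma> * Zn \<alpha> b \<delta> \<sigma> v"
  by (simp add: Zn_def)

lemma intNC: fixes G :: "real \<times> real \<times> (real^'d) \<times> real \<Rightarrow> real"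
  assumes G: "G \<in> borel_measurable borel"
    and i1: "integrable M (\<lambda>w. G (Phi \<alpha> b \<delta> \<sigma> (w, 1)))" and i2: "integrable M (\<lambda>w. G (Phi \<alpha> b \<delta> \<sigma> (w, -1)))"
  shows "integrable (NC \<alpha> b \<delta> \<sigma>) G"
    "integral\<^sup>L (NC \<alpha> b \<delta> \<sigma>) G = (integral\<^sup>L M (\<lambda>w. G (Phi \<alpha> b \<delta> \<sigma> (w, 1))) + integral\<^sup>L M (\<lambda>w. G (Phi \<alpha> b \<delta> \<sigma> (w, -1)))) / 2"
proof -
  have GP: "(\<lambda>p. G (Phi \<alpha> b \<delta> \<sigma> p)) \<in> borel_measurable (M \<Otimes>\<^sub>M Pz)"
    using measurable_compose[OF Phi_meas G] by simp
  note m = mix[OF prob_space_axioms GP, simplified, OF i1 i2]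
  show "integrable (NC \<alpha> b \<delta> \<sigma>) G"
    unfolding NC_def using m(1) integrable_distr_eq[OF Phi_meas G] by simp
  show "integral\<^sup>L (NC \<alpha> b \<delta> \<sigma>) G = (integral\<^sup>L M (\<lambda>w. G (Phi \<alpha> b \<delta> \<sigma> (w, 1))) + integral\<^sup>L M (\<lambda>w. G (Phi \<alpha> b \<delta> \<sigma> (w, -1)))) / 2"
    unfolding NC_def using m(2) integral_distr[OF Phi_meas G] by simp
qed

end

context msetup
begin

context
  fixes \<alpha> b \<delta> \<sigma> :: real
  assumes spos: "0 < \<sigma>"
begin

interpretation T: tsetup M Y X W "NC \<alpha> b \<delta> \<sigma>" by (rule NC_tsetup)

lemma snz: "\<sigma> \<noteq> 0" using spos by simp

lemma Zn_measN: "Zn \<alpha> b \<delta> \<sigma> \<in> borel_measurable (NC \<alpha> b \<delta> \<sigma>)"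
  using cont_meas[OF Zn_cont] measurable_cong_sets[OF T.sN refl] by blast

lemma Zn_borel: "Zn \<alpha> b \<delta> \<sigma> \<in> borel_measurable borel"
  using cont_meas[OF Zn_cont] .

lemma Z_sm: "second_moment (NC \<alpha> b \<delta> \<sigma>) (Zn \<alpha> b \<delta> \<sigma>)"
proof -
  have "integrable (NC \<alpha> b \<delta> \<sigma>) (\<lambda>v. (Zn \<alpha> b \<delta> \<sigma> v)\<^sup>2)"
    by (rule intNC(1)) (use Zn_borel in \<open>simp_all add: Zn_Phi snz\<close>)
  then show ?thesis using Zn_measN by (simp add: second_moment_def)
qed

lemma Z_mean: "mean (NC \<alpha> b \<delta> \<sigma>) (Zn \<alpha> b \<delta> \<sigma>) = 0"
  unfolding mean_def by (subst intNC(2)) (use Zn_borel in \<open>simp_all add: Zn_Phi snz prob_space\<close>)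

lemma Z_var: "varm (NC \<alpha> b \<delta> \<sigma>) (Zn \<alpha> b \<delta> \<sigma>) = 1"
proof -
  have G: "(\<lambda>v. Zn \<alpha> b \<delta> \<sigma> v * Zn \<alpha> b \<delta> \<sigma> v) \<in> borel_measurable borel" using Zn_borel by measurable
  have "varm (NC \<alpha> b \<delta> \<sigma>) (Zn \<alpha> b \<delta> \<sigma>) = integral\<^sup>L (NC \<alpha> b \<delta> \<sigma>) (\<lambda>v. Zn \<alpha> b \<delta> \<sigma> v * Zn \<alpha> b \<delta> \<sigma> v)"
    by (simp add: varm_def cov_def Z_mean) (simp add: mean_def)
  also have "\<dots> = 1" by (subst intNC(2)[OF G]) (simp_all add: Zn_Phi snz prob_space)
  finally show ?thesis .
qed

lemma Z_cov: fixes F :: "real \<times> real \<times> (real^'d) \<Rightarrow> real"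
  assumes F: "continuous_on UNIV F" and smF: "second_moment M (\<lambda>w. F (Y w, X w, W w))"
  shows "cov (NC \<alpha> b \<delta> \<sigma>) (\<lambda>v. F (cY v, cX v, cW1 v)) (Zn \<alpha> b \<delta> \<sigma>) = 0"
proof -
  define m where "m = mean (NC \<alpha> b \<delta> \<sigma>) (\<lambda>v. F (cY v, cX v, cW1 v))"
  have Fm: "(\<lambda>v::real \<times> real \<times> (real^'d) \<times> real. F (cY v, cX v, cW1 v)) \<in> borel_measurable borel"
    using measurable_compose[OF psi_borel cont_meas[OF F]] by simp
  have G: "(\<lambda>v. (F (cY v, cX v, cW1 v) - m) * Zn \<alpha> b \<delta> \<sigma> v) \<in> borel_measurable borel"
    using Fm Zn_borel by measurable
  have iF: "integrable M (\<lambda>w. F (Y w, X w, W w))" using sm_int[OF smF] .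
  have "cov (NC \<alpha> b \<delta> \<sigma>) (\<lambda>v. F (cY v, cX v, cW1 v)) (Zn \<alpha> b \<delta> \<sigma>) = integral\<^sup>L (NC \<alpha> b \<delta> \<sigma>) (\<lambda>v. (F (cY v, cX v, cW1 v) - m) * Zn \<alpha> b \<delta> \<sigma> v)"
    by (simp add: cov_def Z_mean m_def[symmetric]) (simp add: mean_def)
  also have "\<dots> = 0" by (subst intNC(2)[OF G]) (use iF in \<open>simp_all add: Zn_Phi snz Phi_simps\<close>)
  finally show ?thesis .
qed

lemma Z_cov': fixes F :: "real \<times> real \<times> (real^'d) \<Rightarrow> real"
  assumes F: "continuous_on UNIV F" and smF: "second_moment M (\<lambda>w. F (Y w, X w, W w))"
  shows "cov (NC \<alpha> b \<delta> \<sigma>) (Zn \<alpha> b \<delta> \<sigma>) (\<lambda>v. F (cY v, cX v, cW1 v)) = 0"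
  using Z_cov[OF assms] by (simp add: T.Nw.cov_sym)

lemma smHfN: "second_moment (NC \<alpha> b \<delta> \<sigma>) (\<lambda>v. Hf \<alpha> b \<delta> (cY v, cX v, cW1 v))"
  using T.tr_smc[OF Hf_cont] sm_Hf by simp

lemma smW2N: "second_moment (NC \<alpha> b \<delta> \<sigma>) cW2"
proof -
  have "cW2 = (\<lambda>v. Hf \<alpha> b \<delta> (cY v, cX v, cW1 v) + \<sigma> * Zn \<alpha> b \<delta> \<sigma> v)"
    using cW2_Zn[OF snz] by (simp add: fun_eq_iff)
  then show ?thesis using smHfN Z_sm by (metis (no_types) T.Nw.sm_add T.Nw.sm_scale)
qed

lemma var_plus_noise: fixes F :: "real \<times> real \<times> (real^'d) \<Rightarrow> real"
  assumes F: "continuous_on UNIV F" and smF: "second_moment M (\<lambda>w. F (Y w, X w, W w))"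
  shows "varm (NC \<alpha> b \<delta> \<sigma>) (\<lambda>v. F (cY v, cX v, cW1 v) + c * Zn \<alpha> b \<delta> \<sigma> v) = varm M (\<lambda>w. F (Y w, X w, W w)) + c\<^sup>2"
proof -
  have smFN: "second_moment (NC \<alpha> b \<delta> \<sigma>) (\<lambda>v. F (cY v, cX v, cW1 v))" using T.tr_smc[OF F] smF by simp
  have "varm (NC \<alpha> b \<delta> \<sigma>) (\<lambda>v. F (cY v, cX v, cW1 v) + c * Zn \<alpha> b \<delta> \<sigma> v)
      = varm (NC \<alpha> b \<delta> \<sigma>) (\<lambda>v. F (cY v, cX v, cW1 v)) + c\<^sup>2 * varm (NC \<alpha> b \<delta> \<sigma>) (Zn \<alpha> b \<delta> \<sigma>)"
    using smFN Z_sm Z_cov[OF F smF] Z_cov'[OF F smF]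
    by (simp add: varm_def T.Nw.cov_add_left T.Nw.cov_add_right T.Nw.cov_scale_left T.Nw.cov_scale_right power2_eq_square)
  also have "varm (NC \<alpha> b \<delta> \<sigma>) (\<lambda>v. F (cY v, cX v, cW1 v)) = varm M (\<lambda>w. F (Y w, X w, W w))"
    unfolding varm_def by (rule T.tr_covc[OF F F])
  finally show ?thesis by (simp add: Z_var)
qed

lemma A1N: "A1 (NC \<alpha> b \<delta> \<sigma>) cY cX cW1 cW2"
  unfolding A1_def posdef_def
proof (intro allI impI)
  fix v :: "real^'d idx_YXWW" assume v: "v \<noteq> 0"
  have smf: "second_moment (NC \<alpha> b \<delta> \<sigma>) (fam_YXWW cY cX cW1 cW2 k)" for k
    by (cases k) (simp_all add: fam_YXWW_def T.smN_W smW2N)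
  define Lf where "Lf = (\<lambda>t. v $ mY * fst t + v $ mX * fst (snd t) + (\<chi> i. v $ mW1 i) \<bullet> snd (snd t) + v $ mW2 * Hf \<alpha> b \<delta> t)"
  have Lc: "continuous_on UNIV Lf" unfolding Lf_def by (intro continuous_intros Hf_cont)
  have Lsm: "second_moment M (\<lambda>w. Lf (Y w, X w, W w))"
    using sm_Hf[of \<alpha> b \<delta>] by (simp add: Lf_def)
  have pw: "(\<lambda>u. v \<bullet> (\<chi> k. fam_YXWW cY cX cW1 cW2 k u)) = (\<lambda>u. Lf (cY u, cX u, cW1 u) + (v $ mW2 * \<sigma>) * Zn \<alpha> b \<delta> \<sigma> u)"
    by (rule ext, subst inner_YXWW) (simp add: Lf_def cW2_Zn[where \<alpha>=\<alpha> and b=b and \<delta>=\<delta>, OF snz] algebra_simps)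
  have "v \<bullet> (covmat (NC \<alpha> b \<delta> \<sigma>) (fam_YXWW cY cX cW1 cW2) *v v) = varm (NC \<alpha> b \<delta> \<sigma>) (\<lambda>u. v \<bullet> (\<chi> k. fam_YXWW cY cX cW1 cW2 k u))"
    by (rule T.Nw.var_inner[symmetric]) (rule smf)
  also have "\<dots> = varm M (\<lambda>w. Lf (Y w, X w, W w)) + (v $ mW2 * \<sigma>)\<^sup>2"
    unfolding pw by (rule var_plus_noise[OF Lc Lsm])
  finally have eq: "v \<bullet> (covmat (NC \<alpha> b \<delta> \<sigma>) (fam_YXWW cY cX cW1 cW2) *v v) = varm M (\<lambda>w. Lf (Y w, X w, W w)) + (v $ mW2 * \<sigma>)\<^sup>2" .
  show "0 < v \<bullet> (covmat (NC \<alpha> b \<delta> \<sigma>) (fam_YXWW cY cX cW1 cW2) *v v)"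
  proof (cases "v $ mW2 = 0")
    case False
    then have "0 < (v $ mW2 * \<sigma>)\<^sup>2" using snz by simp
    then show ?thesis unfolding eq using varm_nonneg[of "\<lambda>w. Lf (Y w, X w, W w)"] by linarith
  next
    case True
    define u where "u = (\<chi> k. case k of lY \<Rightarrow> v $ mY | lX \<Rightarrow> v $ mX | lW i \<Rightarrow> v $ mW1 i)"
    have "u \<noteq> 0"
    proof
      assume u0: "u = 0"
      have "v $ k = 0" for k
      proof (cases k)
        case mY then show ?thesis using arg_cong[OF u0, of "\<lambda>z. z $ lY"] by (simp add: u_def)
      next
        case mX then show ?thesis using arg_cong[OF u0, of "\<lambda>z. z $ lX"] by (simp add: u_def)
      next
        case (mW1 i) then show ?thesis using arg_cong[OF u0, of "\<lambda>z. z $ lW i"] by (simp add: u_def)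
      next
        case mW2 then show ?thesis using True by simp
      qed
      then show False using v by (simp add: vec_eq_iff)
    qed
    have "(\<lambda>w. Lf (Y w, X w, W w)) = (\<lambda>w. u \<bullet> (\<chi> k. fam_YXW Y X W k w))"
      by (rule ext, subst inner_YXW) (simp add: Lf_def u_def True)
    then have "0 < varm M (\<lambda>w. Lf (Y w, X w, W w))"
      using posdef_var[OF pd3 smfam3 \<open>u \<noteq> 0\<close>] by simp
    then show ?thesis unfolding eq by (simp add: True)
  qed
qed

end
end

context msetup
begin

context
  fixes \<alpha> b \<delta> \<sigma> :: real
  assumes spos: "0 < \<sigma>"
begin

interpretation T: tsetup M Y X W "NC \<alpha> b \<delta> \<sigma>" by (rule NC_tsetup)

interpretation NN: nsetup "NC \<alpha> b \<delta> \<sigma>" cY cX cW2 cW1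
  by (rule nsetup.intro[OF T.pN], rule nsetup_axioms.intro)
    (simp_all add: smW2N[OF spos] T.smN_W A1N[OF spos, unfolded A1_def])

lemma construct:
  fixes r :: real
  defines "vy \<equiv> varm M (res M W Y)" and "vx \<equiv> varm M (res M W X)"
    and "g \<equiv> cov M (res M W Y) (res M W X)" and "Vx \<equiv> varm M (\<lambda>w. qv M W X \<bullet> W w)"
  defines "vv \<equiv> \<alpha>\<^sup>2 * vy + 2 * \<alpha> * b * g + b\<^sup>2 * vx + \<sigma>\<^sup>2"
    and "cxv \<equiv> \<alpha> * g + b * vx" and "cyv \<equiv> \<alpha> * vy + b * g"
  assumes hv: "\<delta>\<^sup>2 * Vx + vv = 1" and hb: "g * vv - cyv * cxv \<le> 0"
    and ha: "\<bar>cxv / vv\<bar> \<le> r * sqrt (Vx - 2 * (cxv / vv) * (\<delta> * Vx) + (cxv / vv)\<^sup>2 * (\<delta>\<^sup>2 * Vx))"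
  shows "\<exists>b0\<le>0. b0 \<in> B_I M Y X W r 0 1"
proof -
  let ?N = "NC \<alpha> b \<delta> \<sigma>"
  define Z where "Z = Zn \<alpha> b \<delta> \<sigma>"
  define RY where "RY = res ?N cW1 cY"
  define RX where "RX = res ?N cW1 cX"
  have snz: "\<sigma> \<noteq> 0" using spos by simp
  have FYc: "continuous_on UNIV (\<lambda>t::real \<times> real \<times> (real^'d). fst t - qv M W Y \<bullet> snd (snd t))"
    by (intro continuous_intros)
  have FXc: "continuous_on UNIV (\<lambda>t::real \<times> real \<times> (real^'d). fst (snd t) - qv M W X \<bullet> snd (snd t))"
    by (intro continuous_intros)
  have smZ[simp]: "second_moment ?N Z" unfolding Z_def by (rule Z_sm[OF spos])
  have smRY[simp]: "second_moment ?N RY" unfolding RY_def by simp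
  have smRX[simp]: "second_moment ?N RX" unfolding RX_def by simp
  have zY: "cov ?N RY Z = 0"
    using Z_cov[OF spos FYc] unfolding RY_def Z_def T.resY_N by (simp add: res_def)
  have zX: "cov ?N RX Z = 0"
    using Z_cov[OF spos FXc] unfolding RX_def Z_def T.resX_N by (simp add: res_def)
  have zY': "cov ?N Z RY = 0" using zY by (simp add: T.Nw.cov_sym)
  have zX': "cov ?N Z RX = 0" using zX by (simp add: T.Nw.cov_sym)
  have zW: "cov ?N (\<lambda>v. cW1 v $ i) Z = 0" for i
    using Z_cov[OF spos, of "\<lambda>t. snd (snd t) $ i"] smW0[of i] unfolding Z_def
    by (simp add: continuous_intros)
  have Zv: "varm ?N Z = 1" unfolding Z_def by (rule Z_var[OF spos])
  have vyN: "varm ?N RY = vy" unfolding RY_def vy_def by (rule T.vyN)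
  have vxN: "varm ?N RX = vx" unfolding RX_def vx_def by (rule T.vxN)
  have gN: "cov ?N RY RX = g" unfolding RY_def RX_def g_def by (rule T.gN)
  have gN': "cov ?N RX RY = g" using gN by (simp add: T.Nw.cov_sym)
  have W2eq: "(\<lambda>v. cW2 v - (\<delta> *\<^sub>R qv M W X) \<bullet> cW1 v) = (\<lambda>v. \<alpha> * RY v + b * RX v + \<sigma> * Z v)"
    by (rule ext) (simp add: cW2_Zn[where \<alpha>=\<alpha> and b=b and \<delta>=\<delta>, OF snz] Z_def RY_def RX_def res_def
        T.qvY T.qvX Hf_def algebra_simps)
  have qW2: "qv ?N cW1 cW2 = \<delta> *\<^sub>R qv M W X"
    unfolding qv_def[of "NC \<alpha> b \<delta> \<sigma>" cW1 cW2]
  proof (rule T.Nw.proj_unique[OF T.Nw.invW T.Nw.smwf smW2N[OF spos]])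
    fix i
    have "cov ?N (\<lambda>v. cW1 v $ i) (\<lambda>v. \<alpha> * RY v + b * RX v + \<sigma> * Z v) = 0"
      using T.Nw.orth_W[of cY i] T.Nw.orth_W[of cX i] zW[of i, unfolded] T.smN_W[of i] smZ
      by (simp add: RY_def RX_def T.Nw.cov_add_right T.Nw.cov_scale_right)
    then show "cov (NC \<alpha> b \<delta> \<sigma>) (wfam cW1 i) (\<lambda>x. cW2 x - (\<delta> *\<^sub>R qv M W X) \<bullet> (\<chi> k. wfam cW1 k x)) = 0"
      by (simp add: chi_wfam W2eq[symmetric] wfam_def)
  qed
  have resW2: "res ?N cW1 cW2 = (\<lambda>v. \<alpha> * RY v + b * RX v + \<sigma> * Z v)"
    unfolding res_def qW2 using W2eq by simp
  have vvN: "varm ?N (res ?N cW1 cW2) = vv"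
    unfolding resW2 vv_def using zY zX zY' zX'
    by (simp add: varm_def T.Nw.cov_add_left T.Nw.cov_add_right T.Nw.cov_scale_left T.Nw.cov_scale_right
        vyN[unfolded varm_def] vxN[unfolded varm_def] gN gN' Zv[unfolded varm_def] power2_eq_square algebra_simps)
  have cxvN: "cov ?N RX (res ?N cW1 cW2) = cxv"
    unfolding resW2 cxv_def using zX
    by (simp add: T.Nw.cov_add_right T.Nw.cov_scale_right vxN[unfolded varm_def] gN' algebra_simps)
  have cyvN: "cov ?N RY (res ?N cW1 cW2) = cyv"
    unfolding resW2 cyv_def using zY
    by (simp add: T.Nw.cov_add_right T.Nw.cov_scale_right vyN[unfolded varm_def] gN algebra_simps)
  have VxN: "varm ?N (\<lambda>v. qv ?N cW1 cX \<bullet> cW1 v) = Vx" unfolding Vx_def by (rule T.VxN)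
  have qWlin: "(\<lambda>v. qv ?N cW1 cW2 \<bullet> cW1 v) = (\<lambda>v. \<delta> * (qv ?N cW1 cX \<bullet> cW1 v))"
    by (simp add: qW2 T.qvX)
  have VwN: "varm ?N (\<lambda>v. qv ?N cW1 cW2 \<bullet> cW1 v) = \<delta>\<^sup>2 * Vx"
    unfolding qWlin using VxN by (simp add: NN.varm_scale)
  have kN: "cov ?N (\<lambda>v. qv ?N cW1 cX \<bullet> cW1 v) (\<lambda>v. qv ?N cW1 cW2 \<bullet> cW1 v) = \<delta> * Vx"
    unfolding qWlin using VxN by (simp add: T.Nw.cov_scale_right varm_def)
  have varW2: "varm ?N cW2 = 1"
    using T.Nw.var_decomp[OF smW2N[OF spos]] VwN vvN hv by simp
  have vvpos: "0 < vv" using NN.S6a vvN by simp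
  have p2: "pi2 ?N cX cW1 cW2 = cxv / vv"
    using NN.S23(1) vvN cxvN vvpos unfolding RX_def by (simp add: field_simps)
  have bl: "beta_long ?N cY cX cW1 cW2 \<le> 0"
  proof -
    have e: "beta_long ?N cY cX cW1 cW2 * (vx * vv - cxv\<^sup>2) = g * vv - cyv * cxv"
      using NN.S1 vvN cxvN cyvN vxN gN unfolding RX_def RY_def by simp
    have d: "0 < vx * vv - cxv\<^sup>2" using NN.S6b vvN cxvN vxN unfolding RX_def by simp
    show ?thesis using e d hb by (metis mult_pos_pos not_le)
  qed
  have arx: "A_rx r ?N cX cW1 cW2"
  proof -
    have pe: "(\<lambda>x. pi1 ?N cX cW1 cW2 \<bullet> cW1 x) = (\<lambda>x. qv ?N cW1 cX \<bullet> cW1 x - pi2 ?N cX cW1 cW2 * (qv ?N cW1 cW2 \<bullet> cW1 x))"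
      by (simp add: NN.S23(2) inner_diff_left)
    have v1: "varm ?N (\<lambda>x. pi1 ?N cX cW1 cW2 \<bullet> cW1 x) = Vx - 2 * (cxv / vv) * (\<delta> * Vx) + (cxv / vv)\<^sup>2 * (\<delta>\<^sup>2 * Vx)"
      unfolding pe using T.Nw.varm_lin[of "\<lambda>x. qv (NC \<alpha> b \<delta> \<sigma>) cW1 cX \<bullet> cW1 x" "\<lambda>x. qv (NC \<alpha> b \<delta> \<sigma>) cW1 cW2 \<bullet> cW1 x" "pi2 (NC \<alpha> b \<delta> \<sigma>) cX cW1 cW2"]
      using VxN VwN kN p2 by simp
    have v2: "sqrt (varm ?N (\<lambda>x. pi2 ?N cX cW1 cW2 * cW2 x)) = \<bar>cxv / vv\<bar>"
    proof -
      have "varm ?N (\<lambda>x. pi2 ?N cX cW1 cW2 * cW2 x) = (pi2 ?N cX cW1 cW2)\<^sup>2 * varm ?N cW2"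
        by (rule NN.varm_scale) (rule smW2N[OF spos])
      then show ?thesis using varW2 by (simp add: p2)
    qed
    show ?thesis unfolding A_rx_def v1 v2 by (rule ha)
  qed
  have ac: "A_c 0 1 ?N cW1 cW2"
  proof -
    have "R_W2_W1 ?N cW1 cW2 = sqrt (\<delta>\<^sup>2 * Vx)" using NN.S5 VwN varW2 by simp
    moreover have "\<delta>\<^sup>2 * Vx \<le> 1" using hv vvpos by simp
    moreover have "0 \<le> \<delta>\<^sup>2 * Vx" using VwN T.Nw.varm_nonneg by metis
    ultimately show ?thesis by (simp add: A_c_def)
  qed
  have mem: "beta_long ?N cY cX cW1 cW2 \<in> B_I M Y X W r 0 1"
    unfolding B_I_def
    using T.pN T.sN T.smN_W smW2N[OF spos] T.dN varW2 A1N[OF spos] arx ac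
    by (auto simp: intro!: exI[of _ "NC \<alpha> b \<delta> \<sigma>"])
  show ?thesis using mem bl by blast
qed

end
end

lemma constr_arith:
  fixes g vx vy Vx r :: real
  assumes g: "0 < g" and vx: "0 < vx" and vy: "0 < vy" and Vx: "0 < Vx" and D: "0 < vx * vy - g\<^sup>2"
    and rl: "sqrt (g\<^sup>2 / (Vx * vy + g\<^sup>2)) < r" and r1: "r < 1"
  shows "\<exists>\<alpha> b \<delta> \<sigma>. 0 < \<sigma> \<and>
     \<delta>\<^sup>2 * Vx + (\<alpha>\<^sup>2 * vy + 2 * \<alpha> * b * g + b\<^sup>2 * vx + \<sigma>\<^sup>2) = 1 \<and>
     g * (\<alpha>\<^sup>2 * vy + 2 * \<alpha> * b * g + b\<^sup>2 * vx + \<sigma>\<^sup>2) - (\<alpha> * vy + b * g) * (\<alpha> * g + b * vx) \<le> 0 \<and>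
     \<bar>(\<alpha> * g + b * vx) / (\<alpha>\<^sup>2 * vy + 2 * \<alpha> * b * g + b\<^sup>2 * vx + \<sigma>\<^sup>2)\<bar> \<le>
       r * sqrt (Vx - 2 * ((\<alpha> * g + b * vx) / (\<alpha>\<^sup>2 * vy + 2 * \<alpha> * b * g + b\<^sup>2 * vx + \<sigma>\<^sup>2)) * (\<delta> * Vx)
         + ((\<alpha> * g + b * vx) / (\<alpha>\<^sup>2 * vy + 2 * \<alpha> * b * g + b\<^sup>2 * vx + \<sigma>\<^sup>2))\<^sup>2 * (\<delta>\<^sup>2 * Vx))"
proof -
  define Dd where "Dd = vx * vy - g\<^sup>2"
  have Dd: "0 < Dd" using D by (simp add: Dd_def)
  have r0: "0 < r" using rl by (metis le_less_trans real_sqrt_ge_zero divide_nonneg_nonneg zero_le_power2 add_nonneg_nonneg mult_nonneg_nonneg Vx vy less_imp_le)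
  define Ms where "Ms = r\<^sup>2 * Vx / (1 - r\<^sup>2)"
  have r21: "r\<^sup>2 < 1" using r0 r1 by (simp add: power_less_one_iff abs_less_iff) 
  have den: "0 < Vx * vy + g\<^sup>2" using Vx vy by (simp add: add_pos_nonneg)
  have t2: "g\<^sup>2 / (Vx * vy + g\<^sup>2) < r\<^sup>2"
  proof -
    have "sqrt (g\<^sup>2 / (Vx * vy + g\<^sup>2)) < sqrt (r\<^sup>2)" using rl r0 by simp
    then show ?thesis by (simp only: real_sqrt_less_iff)
  qed
  have Msg: "g\<^sup>2 < Ms * vy"
  proof -
    have "g\<^sup>2 < r\<^sup>2 * (Vx * vy + g\<^sup>2)" using t2 den by (simp add: divide_less_eq)
    then have "g\<^sup>2 * (1 - r\<^sup>2) < r\<^sup>2 * Vx * vy" by (simp add: algebra_simps)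
    then show ?thesis using r21 by (simp add: Ms_def field_simps)
  qed
  have Ms0: "0 < Ms" using r0 r21 Vx by (simp add: Ms_def)
  define G where "G = sqrt (Ms * vy)"
  have G2: "G\<^sup>2 = Ms * vy" using Ms0 vy by (simp add: G_def)
  have Gg: "g < G"
  proof -
    have "sqrt (g\<^sup>2) < sqrt (Ms * vy)" using Msg by (rule real_sqrt_less_mono)
    then show ?thesis using g by (simp add: G_def)
  qed
  define \<mu> where "\<mu> = (G - g) / vx"
  have \<mu>: "0 < \<mu>" using Gg vx by (simp add: \<mu>_def)
  have G\<mu>: "G = g + \<mu> * vx" using vx by (simp add: \<mu>_def)
  define T where "T = vy + 2 * \<mu> * g + \<mu>\<^sup>2 * vx + \<mu> * Dd / g"
  have Tvy: "vy \<le> T" using \<mu> g vx Dd by (simp add: T_def)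
  have T0: "0 < T" using Tvy vy by simp
  define m where "m = G / sqrt T"
  have m0: "0 < m" using Gg g T0 by (simp add: m_def)
  have m2: "m\<^sup>2 = Ms * vy / T" using T0 by (simp add: m_def power_divide G2)
  have m2Ms: "m\<^sup>2 \<le> Ms"
  proof -
    have "Ms * vy \<le> Ms * T" using Tvy Ms0 by simp
    then show ?thesis using T0 by (simp add: m2 divide_le_eq)
  qed
  define L where "L = sqrt (Vx + m\<^sup>2)"
  have L0: "0 < L" using Vx by (simp add: L_def add_pos_nonneg)
  have L2: "L\<^sup>2 = Vx + m\<^sup>2" using Vx by (simp add: L_def add_pos_nonneg)
  define e where "e = sqrt Vx"
  have e0: "0 < e" using Vx by (simp add: e_def)
  have e2: "e\<^sup>2 = Vx" using Vx by (simp add: e_def)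
  define a where "a = e / L"
  define c where "c = m / L"
  have a0: "0 < a" using e0 L0 by (simp add: a_def)
  have ac: "a\<^sup>2 + c\<^sup>2 = 1"
  proof -
    have "Vx + m\<^sup>2 \<noteq> 0" using L0 L2 by auto
    then show ?thesis by (simp add: a_def c_def power_divide L2 e2 add_divide_distrib[symmetric])
  qed
  define \<alpha> where "\<alpha> = a / sqrt T"
  define b where "b = \<mu> * \<alpha>"
  define \<sigma> where "\<sigma> = \<alpha> * sqrt (\<mu> * Dd / g)"
  define \<delta> where "\<delta> = - c / e"
  have \<alpha>0: "0 < \<alpha>" using a0 T0 by (simp add: \<alpha>_def)
  have \<alpha>2: "\<alpha>\<^sup>2 = a\<^sup>2 / T" using T0 by (simp add: \<alpha>_def power_divide)
  have \<sigma>0: "0 < \<sigma>" using \<alpha>0 \<mu> Dd g by (simp add: \<sigma>_def)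
  have \<sigma>2: "\<sigma>\<^sup>2 = \<alpha>\<^sup>2 * (\<mu> * Dd / g)" using \<mu> Dd g by (simp add: \<sigma>_def power_mult_distrib)
  define vv where "vv = \<alpha>\<^sup>2 * vy + 2 * \<alpha> * b * g + b\<^sup>2 * vx + \<sigma>\<^sup>2"
  have vvT: "vv = \<alpha>\<^sup>2 * T" unfolding vv_def \<sigma>2 using g by (simp add: b_def T_def power2_eq_square field_simps)
  have vva: "vv = a\<^sup>2" using T0 by (simp add: vvT \<alpha>2)
  have vv0: "0 < vv" using a0 by (simp add: vva)
  have d2: "\<delta>\<^sup>2 * Vx = c\<^sup>2" using e0 by (simp add: \<delta>_def power_divide e2[symmetric])
  have c1: "\<delta>\<^sup>2 * Vx + vv = 1" using ac d2 vva by simp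
  have c2: "g * vv - (\<alpha> * vy + b * g) * (\<alpha> * g + b * vx) \<le> 0"
  proof -
    have "g * vv - (\<alpha> * vy + b * g) * (\<alpha> * g + b * vx) = \<alpha>\<^sup>2 * (g * T - (vy + \<mu> * g) * (g + \<mu> * vx))"
      by (simp add: vvT b_def power2_eq_square algebra_simps)
    also have "g * T - (vy + \<mu> * g) * (g + \<mu> * vx) = 0"
      using g by (simp add: T_def Dd_def power2_eq_square field_simps)
    finally show ?thesis by simp
  qed
  define p where "p = (\<alpha> * g + b * vx) / vv"
  have cxv: "\<alpha> * g + b * vx = \<alpha> * G" by (simp add: b_def G\<mu> algebra_simps)
  have p_eq: "p = m * L / e"
  proof -
    have "p = \<alpha> * G / a\<^sup>2" by (simp add: p_def cxv vva)
    also have "\<dots> = G / (a * sqrt T)" using a0 T0 by (simp add: \<alpha>_def power2_eq_square field_simps)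
    also have "\<dots> = m * L / e" using a0 T0 L0 e0 by (simp add: a_def m_def field_simps)
    finally show ?thesis .
  qed
  have p0: "0 \<le> p" using m0 L0 e0 by (simp add: p_eq)
  have inner: "Vx - 2 * p * (\<delta> * Vx) + p\<^sup>2 * (\<delta>\<^sup>2 * Vx) = (e + p * c)\<^sup>2"
  proof -
    have h1: "\<delta> * Vx = - c * e" using e0 by (simp add: \<delta>_def e2[symmetric] power2_eq_square)
    show ?thesis unfolding h1 d2 by (simp add: e2[symmetric] power2_eq_square algebra_simps)
  qed
  have L2e: "L * L = e * e + m * m" using L2 e2 by (simp add: power2_eq_square)
  have ec: "e + p * c = L\<^sup>2 / e" using e0 L0 by (simp add: p_eq c_def L2e power2_eq_square field_simps)
  have c3: "\<bar>p\<bar> \<le> r * sqrt (Vx - 2 * p * (\<delta> * Vx) + p\<^sup>2 * (\<delta>\<^sup>2 * Vx))"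
  proof -
    have s: "sqrt (Vx - 2 * p * (\<delta> * Vx) + p\<^sup>2 * (\<delta>\<^sup>2 * Vx)) = L\<^sup>2 / e"
    proof -
      have "0 \<le> c" using m0 L0 by (simp add: c_def)
      then have "0 \<le> e + p * c" using p0 e0 by simp
      then show ?thesis unfolding inner using e0 by (simp add: ec)
    qed
    have "m\<^sup>2 \<le> r\<^sup>2 * L\<^sup>2"
    proof -
      have "m\<^sup>2 * (1 - r\<^sup>2) \<le> r\<^sup>2 * Vx" using m2Ms r21 by (simp add: Ms_def le_divide_eq)
      then show ?thesis by (simp add: L2 algebra_simps)
    qed
    then have "m \<le> r * L" using m0 r0 L0
      by (metis abs_of_pos mult_pos_pos power_mult_distrib power2_le_imp_le less_imp_le)
    then have "m * L / e \<le> r * L * L / e" using L0 e0 by (simp add: divide_right_mono)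
    then show ?thesis unfolding s using p0 by (simp add: p_eq power2_eq_square mult.assoc)
  qed
  show ?thesis
    apply (rule exI[of _ \<alpha>], rule exI[of _ b], rule exI[of _ \<delta>], rule exI[of _ \<sigma>])
    using \<sigma>0 c1 c2 c3 unfolding vv_def p_def by simp
qed

context msetup
begin

lemma posD: "0 < varm M (res M W X) * varm M (res M W Y) - (cov M (res M W Y) (res M W X))\<^sup>2"
proof -
  define t where "t = cov M (res M W Y) (res M W X) / varm M (res M W X)"
  define v where "v = (\<chi> k. case k of lY \<Rightarrow> 1 | lX \<Rightarrow> - t | lW i \<Rightarrow> - qv M W Y $ i + t * qv M W X $ i)"
  have "v \<noteq> 0" unfolding vec_eq_iff v_def by (auto intro!: exI[of _ lY])
  have "(\<lambda>x. res M W Y x - t * res M W X x) = (\<lambda>x. v \<bullet> (\<chi> k. fam_YXW Y X W k x))"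
    by (rule ext, subst inner_YXW)
      (simp add: res_def inner_vec_def sum_negf v_def sum_subtractf sum_distrib_left algebra_simps sum.distrib)
  with posdef_var[OF pd3 smfam3 \<open>v \<noteq> 0\<close>] have pos: "0 < varm M (\<lambda>x. res M W Y x - t * res M W X x)" by simp
  have e1: "varm M (\<lambda>x. res M W Y x - t * res M W X x) = varm M (res M W Y) - 2 * t * cov M (res M W Y) (res M W X) + t\<^sup>2 * varm M (res M W X)"
    by (rule varm_lin) simp_all
  have e2: "varm M (res M W Y) - 2 * t * cov M (res M W Y) (res M W X) + t\<^sup>2 * varm M (res M W X) = varm M (res M W Y) - (cov M (res M W Y) (res M W X))\<^sup>2 / varm M (res M W X)"
    using posX by (simp add: t_def power2_eq_square field_simps)
  have "0 < varm M (res M W Y) - (cov M (res M W Y) (res M W X))\<^sup>2 / varm M (res M W X)"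
    using pos e1 e2 by simp
  with posX show ?thesis by (simp add: field_simps)
qed

end

theorem mainTheorem2:
  fixes M :: "'a measure" and Y X :: "'a \<Rightarrow> real" and W1 :: "'a \<Rightarrow> real^'d"
  assumes "prob_space M"
    and "second_moment M Y" and "second_moment M X" and "\<forall>i. second_moment M (\<lambda>\<omega>. W1 \<omega> $ i)"
    and "posdef (covmat M (fam_YXW Y X W1))"
    and "covvec M (wfam W1) X \<noteq> 0"
    and "beta_med M Y X W1 \<ge> 0"
  shows "Inf {r. r \<ge> 0 \<and> (\<exists>b\<le>0. b \<in> B_I M Y X W1 r 0 1)} =
         (let R2xw = rsq M X (wfam W1);
              R2yxw = (beta_med M Y X W1)\<^sup>2 * varm M (perp M X (wfam W1)) / varm M (perp M Y (wfam W1))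
          in sqrt (R2yxw / (R2xw / (1 - R2xw) + R2yxw)))"
proof -
  have ms: "msetup M Y X W1"
    by (rule msetup.intro[OF assms(1)], rule msetup_axioms.intro) (use assms in auto)
  interpret msetup M Y X W1 by (rule ms)
  define vy where "vy = varm M (res M W1 Y)"
  define vx where "vx = varm M (res M W1 X)"
  define g where "g = cov M (res M W1 Y) (res M W1 X)"
  define Vx where "Vx = varm M (\<lambda>w. qv M W1 X \<bullet> W1 w)"
  define S where "S = {r. r \<ge> 0 \<and> (\<exists>b\<le>0. b \<in> B_I M Y X W1 r 0 1)}"
  define t0 where "t0 = sqrt (g\<^sup>2 / (Vx * vy + g\<^sup>2))"
  have vy0: "0 < vy" using posY by (simp add: vy_def)
  have vx0: "0 < vx" using posX by (simp add: vx_def)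
  have Vx0: "0 < Vx" using posVx[OF assms(6)] by (simp add: Vx_def)
  have g0: "0 \<le> g" using S7 assms(7) posX by (simp add: g_def)
  have D0: "0 < vx * vy - g\<^sup>2" using posD by (simp add: vx_def vy_def g_def)
  have form: "(let R2xw = rsq M X (wfam W1);
              R2yxw = (beta_med M Y X W1)\<^sup>2 * varm M (perp M X (wfam W1)) / varm M (perp M Y (wfam W1))
          in sqrt (R2yxw / (R2xw / (1 - R2xw) + R2yxw))) = t0"
    using formula_eq[OF assms(6)] by (simp add: t0_def g_def Vx_def vy_def)
  have lb: "t0 \<le> r" if "r \<in> S" for r
  proof -
    from that obtain b0 where r0: "0 \<le> r" and b0: "b0 \<le> 0" and mem: "b0 \<in> B_I M Y X W1 r 0 1"
      by (auto simp: S_def)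
    from mem obtain N where N: "prob_space N" "sets N = sets borel" "second_moment N cW2"
      "distr N borel (\<lambda>\<omega>. (cY \<omega>, cX \<omega>, cW1 \<omega>)) = distr M borel (\<lambda>\<omega>. (Y \<omega>, X \<omega>, W1 \<omega>))"
      "varm N cW2 = 1" "A1 N cY cX cW1 cW2" "A_rx r N cX cW1 cW2" "beta_long N cY cX cW1 cW2 = b0"
      unfolding B_I_def by blast
    interpret T: tsetup M Y X W1 N
      by (rule tsetup.intro[OF ms], rule tsetup_axioms.intro) (use N in auto)
    show ?thesis
      using T.LB_t[OF N(6) N(3) N(5) N(7) r0 _ assms(7) assms(6)] N(8) b0
      by (simp add: t0_def g_def Vx_def vy_def)
  qed
  have "0 \<le> g\<^sup>2 / (Vx * vy + g\<^sup>2)" using Vx0 vy0 by (intro divide_nonneg_nonneg) (simp_all add: add_nonneg_nonneg)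
  then have t0nn: "0 \<le> t0" by (simp add: t0_def)
  show ?thesis
  proof (cases "g = 0")
    case True
    have t00: "t0 = 0" using True by (simp add: t0_def)
    have "\<exists>b0\<le>0. b0 \<in> B_I M Y X W1 0 0 1"
      by (rule construct[of 1 0 0 0 0]) (simp_all add: True[unfolded g_def])
    then have "0 \<in> S" by (simp add: S_def)
    then have "Inf S = 0"
      by (intro cInf_eq_minimum) (auto simp: S_def)
    then show ?thesis unfolding form t00 S_def .
  next
    case False
    then have gp: "0 < g" using g0 by simp
    have t01: "t0 < 1"
    proof -
      have "g\<^sup>2 / (Vx * vy + g\<^sup>2) < 1" using Vx0 vy0 gp by (simp add: divide_less_eq add_pos_nonneg)
      then show ?thesis by (simp add: t0_def)
    qed
    have ub: "\<exists>r\<in>S. r < y" if "t0 < y" for y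
    proof -
      define r where "r = (t0 + min y 1) / 2"
      have rl: "t0 < r" "r < 1" "r < y" using that t01 by (auto simp: r_def)
      obtain \<alpha> b \<delta> \<sigma> where prm: "0 < \<sigma>"
        "\<delta>\<^sup>2 * Vx + (\<alpha>\<^sup>2 * vy + 2 * \<alpha> * b * g + b\<^sup>2 * vx + \<sigma>\<^sup>2) = 1"
        "g * (\<alpha>\<^sup>2 * vy + 2 * \<alpha> * b * g + b\<^sup>2 * vx + \<sigma>\<^sup>2) - (\<alpha> * vy + b * g) * (\<alpha> * g + b * vx) \<le> 0"
        "\<bar>(\<alpha> * g + b * vx) / (\<alpha>\<^sup>2 * vy + 2 * \<alpha> * b * g + b\<^sup>2 * vx + \<sigma>\<^sup>2)\<bar> \<le>
          r * sqrt (Vx - 2 * ((\<alpha> * g + b * vx) / (\<alpha>\<^sup>2 * vy + 2 * \<alpha> * b * g + b\<^sup>2 * vx + \<sigma>\<^sup>2)) * (\<delta> * Vx)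
          + ((\<alpha> * g + b * vx) / (\<alpha>\<^sup>2 * vy + 2 * \<alpha> * b * g + b\<^sup>2 * vx + \<sigma>\<^sup>2))\<^sup>2 * (\<delta>\<^sup>2 * Vx))"
        using constr_arith[OF gp vx0 vy0 Vx0 D0 _ rl(2)] rl(1) unfolding t0_def by blast
      have "\<exists>b0\<le>0. b0 \<in> B_I M Y X W1 r 0 1"
        by (rule construct[OF prm(1)]) (use prm(2-4) in \<open>simp_all add: vy_def vx_def g_def Vx_def\<close>)
      moreover have "0 \<le> r" using rl t0nn by simp
      ultimately show ?thesis using rl(3) unfolding S_def by blast
    qed
    have "Inf S = t0"
    proof (rule cInf_eq_non_empty)
      obtain r where "r \<in> S" using ub[of "t0 + 1"] by auto
      then show "S \<noteq> {}" by auto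
      show "\<And>x. x \<in> S \<Longrightarrow> t0 \<le> x" by (rule lb)
      show "y \<le> t0" if hy: "\<And>x. x \<in> S \<Longrightarrow> y \<le> x" for y
      proof (rule ccontr)
        assume "\<not> y \<le> t0"
        then have "t0 < y" by simp
        then obtain r where "r \<in> S" "r < y" using ub by blast
        then show False using hy by force
      qed
    qed
    then show ?thesis unfolding form S_def .
  qed
qed

end
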